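(* Over profiles whose ballots are strict weak orders (ties allowed): (i) the Split Cycle VCCR $sc$ satisfies Anonymity, Neutrality, Availability, Homogeneity, Downward Homogeneity, Neutral Indifference, Neutral Reversal, Monotonicity, Coherent IIA, Coherent Defeat, and Positive Involvement in Defeat; (ii) any VCCR $f$ satisfying Anonymity, Neutrality, Availability, Downward Homogeneity, Neutral Indifference, Neutral Reversal, Monotonicity for two-candidate profiles, Coherent IIA, Coherent Defeat, and Positive Involvement in Defeat equals $sc$; (iii) the same holds if Downward Homogeneity and Neutral Indifference in (ii) are replaced by Homogeneity.
   Context: Fix infinite sets $\mathcal V$ (voters) and $\mathcal X$ (candidates). For finite $X$, $\mathcal W(X)$ is the set of strict weak orders on $X$ (irreflexive, transitive and negatively transitive relations); $x,y$ are tied in $\succ$ if neither $x\succ y$ nor $y\succ x$; the empty relation (everything tied) is allowed. A profile is a function $\mathbf P:V\to\mathcal W(X)$ for nonempty finite $V\subset\mathcal V$, $X\subset\mathcal X$; $V(\mathbf P)=V$, $X(\mathbf P)=X$. "Voter $i$ ranks $x$ above $y$" means $(x,y)\in\mathbf P(i)$ (strictly). $\mathbf P_{|Y}$ restricts ballots to $Y$. $\mathrm{Margin}_{\mathbf P}(x,y)$ = number of voters ranking $x$ strictly above $y$ minus number ranking $y$ strictly above $x$; $x$ is majority preferred to $y$ if it is $>0$. The margin graph $\mathcal M(\mathbf P)$ has vertices $X(\mathbf P)$ and edges $x\to y$ with weight $\mathrm{Margin}_{\mathbf P}(x,y)$ when positive. A majority path from $x_1$ to $x_n$ is $(x_1,\dots,x_n)$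 with all $\mathrm{Margin}_{\mathbf P}(x_i,x_{i+1})>0$; its strength is the minimum of these margins. A VCCR is a function $f$ giving for each profile an asymmetric relation $f(\mathbf P)$ on $X(\mathbf P)$ ("$x$ defeats $y$" iff $(x,y)\in f(\mathbf P)$). $sc$: $(x,y)\in sc(\mathbf P)$ iff $\mathrm{Margin}_{\mathbf P}(x,y)>0$ and it exceeds the strength of every majority path from $y$ to $x$. Moving up one place: given a strict weak order $\succ$ on finite $X$ and $x$ not $\succ$-greatest, let $x'\neq x$ be $\succ$-minimal among elements with $x\not\succ x'$. $\succ'$ results from moving $x$ up one place if $\succ'$ agrees with $\succ$ on pairs not involving $x$, and: if $x$ is tied with $x'$ in $\succ$, then in $\succ'$ $x$ is tied with no other element, $x\succ' x'$, and $y\succ x$ implies $y\succ' x$; if $x$ is tied with no other element in $\succ$, then $x$ is tied with $x'$ in $\succ'$. Axioms for a VCCR $f$: Anonymity (if $V(\mathbf P)=V(\mathbf P')$ and a bijection $\pi$ of voters has $\mathbf P'(i)=\mathbf P(\pi(i))$, then $f(\mathbf P)=f(\mathbf P')$); Neutrality (if same voters and candidates and a bijection $\pi$ of candidates has $(x,y)\in\mathbf P(i)\iff(\pi x,\pi y)\in\mathbf P'(i)$ for all $i,x,y$, then $(x,y)\in f(\mathbf P)\iff(\pi x,\pi y)\in f(\mathbf P')$); Availability (some candidate is defeated by no one in every $\mathbf P$); Homogeneity $f(\mathbf P)=f(2\mathbf P)$ and Downward Homogeneity $f(\mathbf P)\supseteq f(2\mathbf P)$, where $2\mathbf P$ replaces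 each voter by two copies; Neutral Indifference (adding a voter with the empty ballot leaves $f$ unchanged); Neutral Reversal (adding two voters with mutually converse ballots leaves $f$ unchanged); Monotonicity (resp. for two-candidate profiles): for every profile (resp. every two-candidate profile), if $\mathbf P'$ arises by moving $x$ up one place in one voter's ballot, $(x,y)\in f(\mathbf P)$ implies $(x,y)\in f(\mathbf P')$; Coherent IIA: with $\mathbf P\rightsquigarrow_{x,y}\mathbf P'$ meaning $\mathbf P_{|\{x,y\}}=\mathbf P'_{|\{x,y\}}$ and $\mathcal M(\mathbf P')$ obtainable from $\mathcal M(\mathbf P)$ by deleting zero or more candidates other than $x,y$ and deleting or reducing weights of zero or more edges not connecting $x,y$, if $(x,y)\in f(\mathbf P)$ and $\mathbf P\rightsquigarrow_{x,y}\mathbf P'$ then $(x,y)\in f(\mathbf P')$; Coherent Defeat: if $\mathrm{Margin}_{\mathbf P}(x,y)>0$ and no majority path from $y$ to $x$ exists, then $(x,y)\in f(\mathbf P)$; Positive Involvement in Defeat: if $(x,y)\notin f(\mathbf P)$ and $\mathbf P'$ adds one new voter ranking $y$ strictly above $x$, then $(x,y)\notin f(\mathbf P')$. *)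

theory Defs
  imports Main
begin

text \<open>Canonically P i = {} for voters outside V, so that a profile is determined by the triple.\<close>

type_synonym ('v,'c) vccr = "'v set \<Rightarrow> 'c set \<Rightarrow> ('v \<Rightarrow> ('c \<times> 'c) set) \<Rightarrow> ('c \<times> 'c) set"

definition swo :: "'c set \<Rightarrow> ('c \<times> 'c) set \<Rightarrow> bool" where
  "swo X R \<longleftrightarrow> R \<subseteq> X \<times> X \<and> (\<forall>x. (x,x) \<notin> R) \<and> trans R \<and>
     (\<forall>x\<in>X. \<forall>y\<in>X. \<forall>z\<in>X. (x,y) \<notin> R \<and> (y,z) \<notin> R \<longrightarrow> (x,z) \<notin> R)"

definition profile :: "'v set \<Rightarrow> 'c set \<Rightarrow> ('v \<Rightarrow> ('c \<times> 'c) set) \<Rightarrow> bool" where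
  "profile V X P \<longleftrightarrow> finite V \<and> V \<noteq> {} \<and> finite X \<and> X \<noteq> {} \<and>
     (\<forall>i\<in>V. swo X (P i)) \<and> (\<forall>i. i \<notin> V \<longrightarrow> P i = {})"

definition margin :: "'v set \<Rightarrow> ('v \<Rightarrow> ('c \<times> 'c) set) \<Rightarrow> 'c \<Rightarrow> 'c \<Rightarrow> int" where
  "margin V P x y = int (card {i\<in>V. (x,y) \<in> P i}) - int (card {i\<in>V. (y,x) \<in> P i})"

definition majority_path :: "'v set \<Rightarrow> 'c set \<Rightarrow> ('v \<Rightarrow> ('c \<times> 'c) set) \<Rightarrow> 'c list \<Rightarrow> bool" where
  "majority_path V X P p \<longleftrightarrow> length p \<ge> 2 \<and> set p \<subseteq> X \<and>
     (\<forall>k. Suc k < length p \<longrightarrow> margin V P (p ! k) (p ! Suc k) > 0)"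

definition path_strength :: "'v set \<Rightarrow> ('v \<Rightarrow> ('c \<times> 'c) set) \<Rightarrow> 'c list \<Rightarrow> int" where
  "path_strength V P p = Min {margin V P (p ! k) (p ! Suc k) | k. Suc k < length p}"

definition sc :: "('v,'c) vccr" where
  "sc V X P = {(x,y). x \<in> X \<and> y \<in> X \<and> margin V P x y > 0 \<and>
     (\<forall>p. majority_path V X P p \<and> hd p = y \<and> last p = x \<longrightarrow> margin V P x y > path_strength V P p)}"

definition is_vccr :: "('v,'c) vccr \<Rightarrow> bool" where
  "is_vccr f \<longleftrightarrow> (\<forall>V X P. profile V X P \<longrightarrow> f V X P \<subseteq> X \<times> X \<and>
      (\<forall>x y. (x,y) \<in> f V X P \<longrightarrow> (y,x) \<notin> f V X P))"

definition anonymity :: "('v,'c) vccr \<Rightarrow> bool" where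
  "anonymity f \<longleftrightarrow> (\<forall>V X P P' \<pi>. profile V X P \<and> profile V X P' \<and> bij_betw \<pi> V V \<and>
      (\<forall>i\<in>V. P' i = P (\<pi> i)) \<longrightarrow> f V X P = f V X P')"

definition neutrality :: "('v,'c) vccr \<Rightarrow> bool" where
  "neutrality f \<longleftrightarrow> (\<forall>V X P P' \<pi>. profile V X P \<and> profile V X P' \<and> bij_betw \<pi> X X \<and>
      (\<forall>i\<in>V. \<forall>x\<in>X. \<forall>y\<in>X. (x,y) \<in> P i \<longleftrightarrow> (\<pi> x, \<pi> y) \<in> P' i) \<longrightarrow>
      (\<forall>x\<in>X. \<forall>y\<in>X. (x,y) \<in> f V X P \<longleftrightarrow> (\<pi> x, \<pi> y) \<in> f V X P'))"

definition availability :: "('v,'c) vccr \<Rightarrow> bool" where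
  "availability f \<longleftrightarrow> (\<forall>V X P. profile V X P \<longrightarrow> (\<exists>x\<in>X. \<forall>y. (y,x) \<notin> f V X P))"

definition doubling :: "'v set \<Rightarrow> ('v \<Rightarrow> ('c \<times> 'c) set) \<Rightarrow> 'v set \<Rightarrow> ('v \<Rightarrow> ('c \<times> 'c) set) \<Rightarrow> bool" where
  "doubling V P V2 P2 \<longleftrightarrow> (\<exists>g1 g2. inj_on g1 V \<and> inj_on g2 V \<and> g1 ` V \<inter> g2 ` V = {} \<and>
      V2 = g1 ` V \<union> g2 ` V \<and> (\<forall>i\<in>V. P2 (g1 i) = P i \<and> P2 (g2 i) = P i))"

definition homogeneity :: "('v,'c) vccr \<Rightarrow> bool" where
  "homogeneity f \<longleftrightarrow> (\<forall>V X P V2 P2. profile V X P \<and> profile V2 X P2 \<and> doubling V P V2 P2 \<longrightarrow>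
      f V X P = f V2 X P2)"

definition downward_homogeneity :: "('v,'c) vccr \<Rightarrow> bool" where
  "downward_homogeneity f \<longleftrightarrow> (\<forall>V X P V2 P2. profile V X P \<and> profile V2 X P2 \<and> doubling V P V2 P2 \<longrightarrow>
      f V2 X P2 \<subseteq> f V X P)"

definition neutral_indifference :: "('v,'c) vccr \<Rightarrow> bool" where
  "neutral_indifference f \<longleftrightarrow> (\<forall>V X P j. profile V X P \<and> j \<notin> V \<longrightarrow>
      f (insert j V) X (P(j := {})) = f V X P)"

definition neutral_reversal :: "('v,'c) vccr \<Rightarrow> bool" where
  "neutral_reversal f \<longleftrightarrow> (\<forall>V X P j k R. profile V X P \<and> j \<notin> V \<and> k \<notin> V \<and> j \<noteq> k \<and> swo X R \<longrightarrow>
      f (insert j (insert k V)) X (P(j := R, k := R\<inverse>)) = f V X P)"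

text \<open>R' results from R (a strict weak order on X) by moving x up one place.\<close>
definition move_up :: "'c set \<Rightarrow> ('c \<times> 'c) set \<Rightarrow> 'c \<Rightarrow> ('c \<times> 'c) set \<Rightarrow> bool" where
  "move_up X R x R' \<longleftrightarrow> swo X R \<and> swo X R' \<and> x \<in> X \<and>
     (\<exists>y\<in>X. y \<noteq> x \<and> (x,y) \<notin> R) \<and>
     (\<forall>a b. a \<noteq> x \<and> b \<noteq> x \<longrightarrow> ((a,b) \<in> R' \<longleftrightarrow> (a,b) \<in> R)) \<and>
     (\<exists>x'\<in>X. x' \<noteq> x \<and> (x,x') \<notin> R \<and>
        (\<forall>w\<in>X. w \<noteq> x \<and> (x,w) \<notin> R \<longrightarrow> (x',w) \<notin> R) \<and>
        ((x,x') \<notin> R \<and> (x',x) \<notin> R \<longrightarrow>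
            (\<forall>z\<in>X. z \<noteq> x \<longrightarrow> (x,z) \<in> R' \<or> (z,x) \<in> R') \<and> (x,x') \<in> R' \<and>
            (\<forall>y. (y,x) \<in> R \<longrightarrow> (y,x) \<in> R')) \<and>
        ((\<forall>z\<in>X. z \<noteq> x \<longrightarrow> (x,z) \<in> R \<or> (z,x) \<in> R) \<longrightarrow>
            (x,x') \<notin> R' \<and> (x',x) \<notin> R'))"

definition monotonicity :: "('v,'c) vccr \<Rightarrow> bool" where
  "monotonicity f \<longleftrightarrow> (\<forall>V X P i x y R'. profile V X P \<and> i \<in> V \<and> move_up X (P i) x R' \<longrightarrow>
      (x,y) \<in> f V X P \<longrightarrow> (x,y) \<in> f V X (P(i := R')))"

definition monotonicity_two :: "('v,'c) vccr \<Rightarrow> bool" where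
  "monotonicity_two f \<longleftrightarrow> (\<forall>V X P i x y R'. profile V X P \<and> card X = 2 \<and> i \<in> V \<and> move_up X (P i) x R' \<longrightarrow>
      (x,y) \<in> f V X P \<longrightarrow> (x,y) \<in> f V X (P(i := R')))"

definition coh_reduct :: "'c \<Rightarrow> 'c \<Rightarrow> 'v set \<Rightarrow> 'c set \<Rightarrow> ('v \<Rightarrow> ('c \<times> 'c) set) \<Rightarrow>
     'v set \<Rightarrow> 'c set \<Rightarrow> ('v \<Rightarrow> ('c \<times> 'c) set) \<Rightarrow> bool" where
  "coh_reduct x y V X P V' X' P' \<longleftrightarrow> x \<in> X' \<and> y \<in> X' \<and> X' \<subseteq> X \<and> V' = V \<and>
     (\<forall>i\<in>V. P i \<inter> ({x,y} \<times> {x,y}) = P' i \<inter> ({x,y} \<times> {x,y})) \<and>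
     (\<forall>a\<in>X'. \<forall>b\<in>X'. {a,b} \<noteq> {x,y} \<and> margin V' P' a b > 0 \<longrightarrow> margin V P a b \<ge> margin V' P' a b)"

definition coherent_IIA :: "('v,'c) vccr \<Rightarrow> bool" where
  "coherent_IIA f \<longleftrightarrow> (\<forall>V X P V' X' P' x y. profile V X P \<and> profile V' X' P' \<and>
      coh_reduct x y V X P V' X' P' \<and> (x,y) \<in> f V X P \<longrightarrow> (x,y) \<in> f V' X' P')"

definition coherent_defeat :: "('v,'c) vccr \<Rightarrow> bool" where
  "coherent_defeat f \<longleftrightarrow> (\<forall>V X P x y. profile V X P \<and> x \<in> X \<and> y \<in> X \<and> margin V P x y > 0 \<and>
      \<not> (\<exists>p. majority_path V X P p \<and> hd p = y \<and> last p = x) \<longrightarrow> (x,y) \<in> f V X P)"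

definition positive_involvement_defeat :: "('v,'c) vccr \<Rightarrow> bool" where
  "positive_involvement_defeat f \<longleftrightarrow> (\<forall>V X P j R x y. profile V X P \<and> j \<notin> V \<and> swo X R \<and>
      (y,x) \<in> R \<and> (x,y) \<notin> f V X P \<longrightarrow> (x,y) \<notin> f (insert j V) X (P(j := R)))"

end

theory Submission
  imports Defs
begin



definition vt :: "('c \<times> 'c) set \<Rightarrow> 'c \<Rightarrow> 'c \<Rightarrow> int" where
  "vt R a b = (if (a,b) \<in> R then 1 else 0) - (if (b,a) \<in> R then 1 else 0)"

lemma vt_swap: "vt R b a = - vt R a b" by (simp add: vt_def)
lemma vt_self[simp]: "vt R a a = 0" by (simp add: vt_def)
lemma vt_empty[simp]: "vt {} a b = 0" by (simp add: vt_def)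
lemma vt_conv[simp]: "vt (R\<inverse>) a b = - vt R a b" by (simp add: vt_def)

lemma card_filter_int: "finite V \<Longrightarrow> int (card {i\<in>V. Q i}) = (\<Sum>i\<in>V. if Q i then 1 else 0)"
proof (induct V rule: finite_induct)
  case (insert x F)
  have e: "{i\<in>insert x F. Q i} = (if Q x then insert x {i\<in>F. Q i} else {i\<in>F. Q i})" by auto
  show ?case unfolding e using insert by simp
qed simp

lemma margin_sum: "finite V \<Longrightarrow> margin V P a b = (\<Sum>i\<in>V. vt (P i) a b)"
  by (simp add: margin_def vt_def card_filter_int sum_subtractf)

lemma margin_swap: "margin V P b a = - margin V P a b" by (simp add: margin_def)
lemma margin_self[simp]: "margin V P a a = 0" by (simp add: margin_def)

lemma swo_asym: "swo X R \<Longrightarrow> (a,b) \<in> R \<Longrightarrow> (b,a) \<notin> R"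
  unfolding swo_def trans_def by blast

lemma swo_sub: "swo X R \<Longrightarrow> R \<subseteq> X \<times> X" unfolding swo_def by blast

definition rankrel :: "'c set \<Rightarrow> ('c \<Rightarrow> nat) \<Rightarrow> ('c \<times> 'c) set" where
  "rankrel X rk = {(a,b). a \<in> X \<and> b \<in> X \<and> rk b < rk a}"

lemma swo_rankrel: "swo X (rankrel X rk)"
  unfolding swo_def rankrel_def trans_def by auto

lemma vt_rankrel: "vt (rankrel X rk) a b =
   (if a \<in> X \<and> b \<in> X then (if rk b < rk a then 1 else if rk a < rk b then -1 else 0) else 0)"
  unfolding vt_def rankrel_def by auto

definition G :: "'v set \<Rightarrow> 'c set \<Rightarrow> ('v \<Rightarrow> ('c \<times> 'c) set) \<Rightarrow> int \<Rightarrow> ('c \<times> 'c) set" where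
  "G V X P k = {(a,b). a \<in> X \<and> b \<in> X \<and> margin V P a b \<ge> k}"

lemma path_trancl:
  "successively (\<lambda>u v. (u,v) \<in> r) p \<Longrightarrow> length p \<ge> 2 \<Longrightarrow> (hd p, last p) \<in> r\<^sup>+"
proof (induction p rule: induct_list012)
  case (3 x y zs)
  show ?case
  proof (cases zs)
    case Nil
    then show ?thesis using 3 by auto
  next
    case (Cons z zs')
    then have "(hd (y # zs), last (y # zs)) \<in> r\<^sup>+" using 3 by auto
    moreover have "(x,y) \<in> r" using 3 by auto
    ultimately show ?thesis by auto
  qed
qed auto

lemma trancl_path0:
  assumes "(a,b) \<in> r\<^sup>+"
  shows "\<exists>p. distinct p \<and> p \<noteq> [] \<and> hd p = a \<and> last p = b \<and> successively (\<lambda>u v. (u,v) \<in> r) p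
            \<and> (length p \<ge> 2 \<or> a = b)"
  using assms
proof (induction rule: trancl_induct)
  case (base y)
  show ?case
  proof (cases "a = y")
    case True then show ?thesis by (intro exI[of _ "[a]"]) auto
  next
    case False then show ?thesis using base by (intro exI[of _ "[a,y]"]) auto
  qed
next
  case (step y z)
  then obtain p where p: "distinct p" "p \<noteq> []" "hd p = a" "last p = y"
    "successively (\<lambda>u v. (u,v) \<in> r) p" "length p \<ge> 2 \<or> a = y" by blast
  show ?case
  proof (cases "z \<in> set p")
    case True
    then obtain i where i: "i < length p" "p ! i = z" by (auto simp: in_set_conv_nth)
    define q where "q = take (Suc i) p"
    have "successively (\<lambda>u v. (u,v) \<in> r) (q @ drop (Suc i) p)" using p(5) by (simp add: q_def)
    then have sq: "successively (\<lambda>u v. (u,v) \<in> r) q" by (simp add: successively_append_iff)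
    have "last q = z" using i by (simp add: q_def take_Suc_conv_app_nth)
    moreover have "hd q = a" using p i by (simp add: q_def hd_take)
    moreover have "length q \<ge> 2 \<or> a = z"
    proof (cases i)
      case 0 then show ?thesis using i p by (simp add: hd_conv_nth)
    next
      case (Suc j) then show ?thesis using i by (simp add: q_def)
    qed
    ultimately show ?thesis using sq p by (intro exI[of _ q]) (auto simp: q_def)
  next
    case False
    have "successively (\<lambda>u v. (u,v) \<in> r) (p @ [z])"
      using p step by (auto simp: successively_append_iff)
    moreover have "length (p @ [z]) \<ge> 2" using p by (cases p) auto
    ultimately show ?thesis using p False by (intro exI[of _ "p @ [z]"]) auto
  qed
qed

lemma trancl_path:
  assumes "(a,b) \<in> r\<^sup>+" "a \<noteq> b"
  shows "\<exists>p. distinct p \<and> length p \<ge> 2 \<and> hd p = a \<and> last p = b \<and> successively (\<lambda>u v. (u,v) \<in> r) p"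
  using trancl_path0[OF assms(1)] assms(2) by blast

lemma succ_set_sub:
  "successively (\<lambda>u v. (u,v) \<in> r) p \<Longrightarrow> length p \<ge> 2 \<Longrightarrow> r \<subseteq> X \<times> X \<Longrightarrow> set p \<subseteq> X"
proof (induction p rule: induct_list012)
  case (3 x y zs)
  then show ?case by (cases zs) auto
qed auto

lemma ps_ge:
  assumes "length p \<ge> 2"
  shows "(k \<le> path_strength V P p) \<longleftrightarrow> (\<forall>i. Suc i < length p \<longrightarrow> k \<le> margin V P (p!i) (p!Suc i))"
proof -
  have eq: "{margin V P (p ! k) (p ! Suc k) |k. Suc k < length p} = (\<lambda>i. margin V P (p!i) (p!Suc i)) ` {i. Suc i < length p}"
    by auto
  have fin: "finite {i. Suc i < length p}" by (rule finite_subset[of _ "{..<length p}"]) auto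
  have ne: "{i. Suc i < length p} \<noteq> {}" using assms by (auto intro: exI[of _ 0])
  show ?thesis unfolding path_strength_def eq
    using fin ne by (subst Min_ge_iff) auto
qed

lemma sc_iff: "(x,y) \<in> sc V X P \<longleftrightarrow> x \<in> X \<and> y \<in> X \<and> margin V P x y > 0 \<and>
    (y,x) \<notin> (G V X P (margin V P x y))\<^sup>+"
proof
  assume a: "(x,y) \<in> sc V X P"
  let ?m = "margin V P x y"
  have b: "x \<in> X" "y \<in> X" "?m > 0" using a by (auto simp: sc_def)
  have "x \<noteq> y" using b by auto
  show "x \<in> X \<and> y \<in> X \<and> ?m > 0 \<and> (y,x) \<notin> (G V X P ?m)\<^sup>+"
  proof (intro conjI b notI)
    assume "(y,x) \<in> (G V X P ?m)\<^sup>+"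
    then obtain p where p: "distinct p" "length p \<ge> 2" "hd p = y" "last p = x"
      "successively (\<lambda>u v. (u,v) \<in> G V X P ?m) p" using trancl_path \<open>x \<noteq> y\<close> by metis
    have sub: "set p \<subseteq> X" using succ_set_sub[OF p(5) p(2)] by (auto simp: G_def)
    have edges: "\<forall>i. Suc i < length p \<longrightarrow> ?m \<le> margin V P (p!i) (p!Suc i)"
      using p(5) by (auto simp: successively_conv_nth G_def)
    have "majority_path V X P p" unfolding majority_path_def using p(2) sub edges b(3)
      by fastforce
    moreover have "?m \<le> path_strength V P p" using ps_ge[OF p(2)] edges by blast
    ultimately show False using a p(3,4) by (auto simp: sc_def)
  qed
next
  assume a: "x \<in> X \<and> y \<in> X \<and> margin V P x y > 0 \<and> (y,x) \<notin> (G V X P (margin V P x y))\<^sup>+"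
  let ?m = "margin V P x y"
  have "\<forall>p. majority_path V X P p \<and> hd p = y \<and> last p = x \<longrightarrow> ?m > path_strength V P p"
  proof (intro allI impI)
    fix p assume p: "majority_path V X P p \<and> hd p = y \<and> last p = x"
    show "?m > path_strength V P p"
    proof (rule ccontr)
      assume p4: "\<not> ?m > path_strength V P p"
      have l: "length p \<ge> 2" and s: "set p \<subseteq> X" using p by (auto simp: majority_path_def)
      have "\<forall>i. Suc i < length p \<longrightarrow> ?m \<le> margin V P (p!i) (p!Suc i)"
        using ps_ge[OF l, of "margin V P x y" V P] p4 by auto
      then have "successively (\<lambda>u v. (u,v) \<in> G V X P ?m) p"
        using s by (auto simp: successively_conv_nth G_def)
      from path_trancl[OF this l] have "(y,x) \<in> (G V X P ?m)\<^sup>+" using p by simp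
      then show False using a by simp
    qed
  qed
  then show "(x,y) \<in> sc V X P" using a unfolding sc_def by auto
qed



lemma profile_finite: "profile V X P \<Longrightarrow> finite V" by (simp add: profile_def)

lemma margin_insert:
  assumes "finite V" "j \<notin> V"
  shows "margin (insert j V) (P(j:=R)) a b = margin V P a b + vt R a b"
proof -
  have "margin (insert j V) (P(j:=R)) a b = vt R a b + (\<Sum>i\<in>V. vt ((P(j:=R)) i) a b)"
    using assms by (simp add: margin_sum)
  also have "(\<Sum>i\<in>V. vt ((P(j:=R)) i) a b) = (\<Sum>i\<in>V. vt (P i) a b)"
    using assms by (intro sum.cong) auto
  finally show ?thesis using assms by (simp add: margin_sum)
qed

lemma margin_update:
  assumes "finite V" "i \<in> V"
  shows "margin V (P(i:=R)) a b = margin V P a b - vt (P i) a b + vt R a b"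
proof -
  have V: "V = insert i (V - {i})" using assms by auto
  have 1: "margin V (P(i:=R)) a b = margin (V - {i}) P a b + vt R a b"
    using V assms margin_insert[of "V - {i}" i P R a b] by simp
  have 2: "margin V P a b = margin (V - {i}) P a b + vt (P i) a b"
    using V assms margin_insert[of "V - {i}" i P "P i" a b] by simp
  show ?thesis using 1 2 by simp
qed

lemma sc_cong:
  assumes "\<And>a b. margin V' P' a b = margin V P a b"
  shows "sc V' X P' = sc V X P"
proof -
  have "\<And>k. G V' X P' k = G V X P k" using assms by (auto simp: G_def)
  then show ?thesis using assms by (auto simp: sc_iff)
qed

lemma trancl_map_rel:
  assumes "(a,b) \<in> r\<^sup>+" "\<And>u v. (u,v) \<in> r \<Longrightarrow> (h u, h v) \<in> s"
  shows "(h a, h b) \<in> s\<^sup>+"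
  using assms(1)
proof (induction rule: trancl_induct)
  case (base y) then show ?case using assms(2) by auto
next
  case (step y z)
  then show ?case using assms(2) by (meson trancl.simps)
qed

lemma sc_is_vccr: "is_vccr sc"
  unfolding is_vccr_def
proof (intro allI impI conjI)
  fix V X and P :: "'v \<Rightarrow> ('c \<times> 'c) set"
  show "sc V X P \<subseteq> X \<times> X" by (auto simp: sc_iff)
  fix x y assume "(x, y) \<in> sc V X P"
  then have "margin V P x y > 0" by (simp add: sc_iff)
  then have "\<not> margin V P y x > 0" using margin_swap[of V P y x] by simp
  then show "(y, x) \<notin> sc V X P" by (simp add: sc_iff)
qed

lemma sc_anonymity: "anonymity sc"
  unfolding anonymity_def
proof (intro allI impI)
  fix V X P P' \<pi>
  assume a: "profile V X P \<and> profile V X P' \<and> bij_betw \<pi> V V \<and> (\<forall>i\<in>V. P' i = P (\<pi> i))"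
  have "\<And>a b. margin V P' a b = margin V P a b"
  proof -
    fix a b
    have "margin V P' a b = (\<Sum>i\<in>V. vt (P (\<pi> i)) a b)"
      using a by (simp add: margin_sum profile_def)
    also have "\<dots> = (\<Sum>i\<in>V. vt (P i) a b)"
      using a sum.reindex_bij_betw[of \<pi> V V "\<lambda>i. vt (P i) a b"] by simp
    finally show "margin V P' a b = margin V P a b" using a by (simp add: margin_sum profile_def)
  qed
  then show "sc V X P = sc V X P'" using sc_cong by metis
qed

lemma sc_neutrality: "neutrality sc"
  unfolding neutrality_def
proof (intro allI impI ballI)
  fix V X P P' \<pi> x y
  assume a: "profile V X P \<and> profile V X P' \<and> bij_betw \<pi> X X \<and>
      (\<forall>i\<in>V. \<forall>x\<in>X. \<forall>y\<in>X. (x,y) \<in> P i \<longleftrightarrow> (\<pi> x, \<pi> y) \<in> P' i)"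
  assume xy: "x \<in> X" "y \<in> X"
  have fin: "finite V" using a by (simp add: profile_def)
  have mg: "margin V P' (\<pi> a) (\<pi> b) = margin V P a b" if "a \<in> X" "b \<in> X" for a b
  proof -
    have "\<forall>i\<in>V. vt (P' i) (\<pi> a) (\<pi> b) = vt (P i) a b" using a that by (simp add: vt_def)
    then show ?thesis using fin by (simp add: margin_sum)
  qed
  have pX: "\<pi> a \<in> X" if "a \<in> X" for a using a that by (auto simp: bij_betw_def)
  define h where "h = inv_into X \<pi>"
  have hX: "h a \<in> X" "\<pi> (h a) = a" if "a \<in> X" for a
    using a that by (auto simp: h_def bij_betw_def inv_into_into f_inv_into_f)
  have hp: "h (\<pi> a) = a" if "a \<in> X" for a using a that by (auto simp: h_def bij_betw_def)
  have G1: "(\<pi> u, \<pi> v) \<in> G V X P' k" if "(u,v) \<in> G V X P k" for u v k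
    using that mg pX by (auto simp: G_def)
  have G2: "(h u, h v) \<in> G V X P k" if "(u,v) \<in> G V X P' k" for u v k
  proof -
    have "u \<in> X" "v \<in> X" using that by (auto simp: G_def)
    then show ?thesis using that mg[of "h u" "h v"] hX by (auto simp: G_def)
  qed
  have m: "margin V P' (\<pi> x) (\<pi> y) = margin V P x y" using mg xy by simp
  have "(y,x) \<in> (G V X P k)\<^sup>+ \<longleftrightarrow> (\<pi> y, \<pi> x) \<in> (G V X P' k)\<^sup>+" for k
  proof
    assume "(y,x) \<in> (G V X P k)\<^sup>+"
    then show "(\<pi> y, \<pi> x) \<in> (G V X P' k)\<^sup>+" using trancl_map_rel G1 by metis
  next
    assume "(\<pi> y, \<pi> x) \<in> (G V X P' k)\<^sup>+"
    then have "(h (\<pi> y), h (\<pi> x)) \<in> (G V X P k)\<^sup>+" using trancl_map_rel G2 by metis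
    then show "(y,x) \<in> (G V X P k)\<^sup>+" using hp xy by simp
  qed
  then show "(x,y) \<in> sc V X P \<longleftrightarrow> (\<pi> x, \<pi> y) \<in> sc V X P'"
    using m xy pX by (simp add: sc_iff)
qed

lemma sc_coherent_defeat: "coherent_defeat sc"
  unfolding coherent_defeat_def sc_def by auto

lemma sc_neutral_indifference: "neutral_indifference sc"
  unfolding neutral_indifference_def
proof (intro allI impI)
  fix V X P j assume a: "profile V X P \<and> j \<notin> V"
  then have "\<And>a b. margin (insert j V) (P(j:={})) a b = margin V P a b"
    by (simp add: margin_insert profile_def)
  then show "sc (insert j V) X (P(j := {})) = sc V X P" by (rule sc_cong)
qed

lemma sc_neutral_reversal: "neutral_reversal sc"
  unfolding neutral_reversal_def
proof (intro allI impI)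
  fix V X P j k R assume a: "profile V X P \<and> j \<notin> V \<and> k \<notin> V \<and> j \<noteq> k \<and> swo X R"
  have "margin (insert j (insert k V)) (P(k := R\<inverse>, j := R)) a b = margin V P a b" for a b
    using a by (simp add: margin_insert profile_def)
  moreover have "P(j := R, k := R\<inverse>) = P(k := R\<inverse>, j := R)" using a by (auto simp: fun_upd_twist)
  ultimately show "sc (insert j (insert k V)) X (P(j := R, k := R\<inverse>)) = sc V X P"
    using sc_cong by metis
qed



lemma move_up_vt:
  assumes mu: "move_up X R x R'"
  shows "vt R x z \<le> vt R' x z" "a \<noteq> x \<Longrightarrow> b \<noteq> x \<Longrightarrow> vt R' a b = vt R a b"
proof -
  have sR: "swo X R" and sR': "swo X R'" and xX: "x \<in> X"
    and unch: "\<forall>a b. a \<noteq> x \<and> b \<noteq> x \<longrightarrow> ((a,b) \<in> R' \<longleftrightarrow> (a,b) \<in> R)"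
    using mu unfolding move_up_def by blast+
  obtain x' where x'X: "x' \<in> X" and x'x: "x' \<noteq> x" and nxx': "(x,x') \<notin> R"
    and minl: "\<forall>w\<in>X. w \<noteq> x \<and> (x,w) \<notin> R \<longrightarrow> (x',w) \<notin> R"
    and T: "(x,x') \<notin> R \<and> (x',x) \<notin> R \<longrightarrow>
            (\<forall>z\<in>X. z \<noteq> x \<longrightarrow> (x,z) \<in> R' \<or> (z,x) \<in> R') \<and> (x,x') \<in> R' \<and>
            (\<forall>y. (y,x) \<in> R \<longrightarrow> (y,x) \<in> R')"
    and N: "(\<forall>z\<in>X. z \<noteq> x \<longrightarrow> (x,z) \<in> R \<or> (z,x) \<in> R) \<longrightarrow> (x,x') \<notin> R' \<and> (x',x) \<notin> R'"
    using mu unfolding move_up_def by blast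
  have subR: "R \<subseteq> X \<times> X" and irR: "\<forall>u. (u,u) \<notin> R" and trR: "trans R"
    and ntR: "\<forall>u\<in>X. \<forall>v\<in>X. \<forall>w\<in>X. (u,v) \<notin> R \<and> (v,w) \<notin> R \<longrightarrow> (u,w) \<notin> R"
    using sR unfolding swo_def by blast+
  have subR': "R' \<subseteq> X \<times> X" and irR': "\<forall>u. (u,u) \<notin> R'" and trR': "trans R'"
    and ntR': "\<forall>u\<in>X. \<forall>v\<in>X. \<forall>w\<in>X. (u,v) \<notin> R' \<and> (v,w) \<notin> R' \<longrightarrow> (u,w) \<notin> R'"
    using sR' unfolding swo_def by blast+
  have C: "(\<forall>z. (x,z) \<in> R \<longrightarrow> (x,z) \<in> R') \<and> (\<forall>z. z \<noteq> x \<and> (x,z) \<notin> R \<and> (z,x) \<notin> R \<longrightarrow> (z,x) \<notin> R')"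
  proof (cases "(x',x) \<in> R")
    case False
    then have T1: "(x,x') \<in> R'" using T nxx' by blast
    show ?thesis
    proof (intro conjI allI impI)
      fix z assume xz: "(x,z) \<in> R"
      then have zX: "z \<in> X" and zx: "z \<noteq> x" using subR irR by auto
      have "(x',z) \<in> R" using ntR xX x'X zX nxx' xz by blast
      then have "(x',z) \<in> R'" using unch x'x zx by blast
      then show "(x,z) \<in> R'" using T1 trR' by (meson transE)
    next
      fix z assume z: "z \<noteq> x \<and> (x, z) \<notin> R \<and> (z, x) \<notin> R"
      show "(z,x) \<notin> R'"
      proof
        assume zx: "(z,x) \<in> R'"
        then have zX: "z \<in> X" using subR' by auto
        have "(z,x') \<in> R'" using zx T1 trR' by (meson transE)
        then have "(z,x') \<in> R" using unch z x'x by blast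
        then show False using ntR zX xX x'X z nxx' by blast
      qed
    qed
  next
    case True
    have all: "\<forall>z\<in>X. z \<noteq> x \<longrightarrow> (x,z) \<in> R \<or> (z,x) \<in> R"
    proof (intro ballI impI, rule ccontr)
      fix z assume zX: "z \<in> X" and zx: "z \<noteq> x" and nn: "\<not> ((x,z) \<in> R \<or> (z,x) \<in> R)"
      then have "(x',z) \<notin> R" using minl by blast
      then show False using ntR x'X zX xX nn True by blast
    qed
    then have N1: "(x,x') \<notin> R'" "(x',x) \<notin> R'" using N by blast+
    show ?thesis
    proof (intro conjI allI impI)
      fix z assume xz: "(x,z) \<in> R"
      then have zX: "z \<in> X" and zx: "z \<noteq> x" using subR irR by auto
      have "(x',z) \<in> R" using True xz trR by (meson transE)
      then have "(x',z) \<in> R'" using unch x'x zx by blast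
      then show "(x,z) \<in> R'" using ntR' x'X xX zX N1 by blast
    next
      fix z assume z: "z \<noteq> x \<and> (x, z) \<notin> R \<and> (z, x) \<notin> R"
      show "(z,x) \<notin> R'"
      proof
        assume "(z,x) \<in> R'"
        then have "z \<in> X" using subR' by auto
        then show False using all z by blast
      qed
    qed
  qed
  show "vt R x z \<le> vt R' x z"
  proof (cases "z = x")
    case True then show ?thesis by simp
  next
    case zx: False
    show ?thesis
    proof (cases "(x,z) \<in> R")
      case True
      then have "(x,z) \<in> R'" using C by blast
      then show ?thesis using True swo_asym[OF sR True] swo_asym[OF sR'] by (simp add: vt_def)
    next
      case False
      then show ?thesis
      proof (cases "(z,x) \<in> R")
        case True then show ?thesis using False by (simp add: vt_def)
      next
        case F2: False
        then have "(z,x) \<notin> R'" using C zx False by blast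
        then show ?thesis using False F2 by (simp add: vt_def)
      qed
    qed
  qed
  assume "a \<noteq> x" "b \<noteq> x"
  then have "(a,b) \<in> R' \<longleftrightarrow> (a,b) \<in> R" "(b,a) \<in> R' \<longleftrightarrow> (b,a) \<in> R" using unch by blast+
  then show "vt R' a b = vt R a b" by (simp add: vt_def)
qed



lemma first_arrival:
  assumes "(a,z) \<in> r\<^sup>+" "a \<noteq> x"
  shows "(a,z) \<in> {(u,v). (u,v) \<in> r \<and> u \<noteq> x}\<^sup>+ \<or> (a,x) \<in> {(u,v). (u,v) \<in> r \<and> u \<noteq> x}\<^sup>+"
  using assms(1)
proof (induction rule: trancl_induct)
  case (base y) then show ?case using assms(2) by auto
next
  case (step y z)
  show ?case
  proof (cases "y = x")
    case True then show ?thesis using step by auto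
  next
    case False
    let ?E = "{(u,v). (u,v) \<in> r \<and> u \<noteq> x}"
    have yz: "(y,z) \<in> ?E" using step False by simp
    from step.IH show ?thesis
    proof
      assume "(a,y) \<in> ?E\<^sup>+"
      then have "(a,z) \<in> ?E\<^sup>+" using yz by (rule trancl_into_trancl)
      then show ?thesis by blast
    next
      assume "(a,x) \<in> ?E\<^sup>+" then show ?thesis by blast
    qed
  qed
qed

lemma sc_monotonicity: "monotonicity sc"
  unfolding monotonicity_def
proof (intro allI impI)
  fix V X P i x y R'
  assume a: "profile V X P \<and> i \<in> V \<and> move_up X (P i) x R'"
  assume xy: "(x,y) \<in> sc V X P"
  have fV: "finite V" using a by (simp add: profile_def)
  let ?P' = "P(i := R')"
  have mv: "margin V ?P' u v = margin V P u v - vt (P i) u v + vt R' u v" for u v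
    using margin_update[of V i P R' u v] fV a by simp
  have m1: "margin V ?P' x z \<ge> margin V P x z" for z
    using mv[of x z] move_up_vt(1)[of X "P i" x R' z] a by simp
  have m2: "margin V ?P' z x \<le> margin V P z x" for z
    using m1[of z] margin_swap[of V ?P' z x] margin_swap[of V P z x] by simp
  have m3: "u \<noteq> x \<Longrightarrow> v \<noteq> x \<Longrightarrow> margin V ?P' u v = margin V P u v" for u v
    using mv[of u v] move_up_vt(2)[of X "P i" x R' u v] a by simp
  let ?m = "margin V P x y"
  let ?m' = "margin V ?P' x y"
  have xyX: "x \<in> X" "y \<in> X" "?m > 0" and nt: "(y,x) \<notin> (G V X P ?m)\<^sup>+" using xy by (auto simp: sc_iff)
  have mm: "?m \<le> ?m'" using m1 by simp
  have yx: "y \<noteq> x" using xyX by auto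
  show "(x,y) \<in> sc V X ?P'"
  proof (simp add: sc_iff xyX, intro conjI notI)
    show "0 < ?m'" using mm xyX by simp
    assume "(y,x) \<in> (G V X ?P' ?m')\<^sup>+"
    moreover have "G V X ?P' ?m' \<subseteq> G V X ?P' ?m" using mm by (auto simp: G_def)
    ultimately have "(y,x) \<in> (G V X ?P' ?m)\<^sup>+" using trancl_mono by blast
    then have "(y,x) \<in> {(u,v). (u,v) \<in> G V X ?P' ?m \<and> u \<noteq> x}\<^sup>+"
      using first_arrival[of y x _ x] yx by blast
    moreover have "{(u,v). (u,v) \<in> G V X ?P' ?m \<and> u \<noteq> x} \<subseteq> G V X P ?m"
    proof clarify
      fix u v assume uv: "(u,v) \<in> G V X ?P' ?m" "u \<noteq> x"
      show "(u,v) \<in> G V X P ?m"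
      proof (cases "v = x")
        case True then show ?thesis using uv m2[of u] by (auto simp: G_def)
      next
        case False then show ?thesis using uv m3[of u v] by (auto simp: G_def)
      qed
    qed
    ultimately have "(y,x) \<in> (G V X P ?m)\<^sup>+" using trancl_mono by blast
    then show False using nt by simp
  qed
qed



lemma sc_coherent_IIA: "coherent_IIA sc"
  unfolding coherent_IIA_def
proof (intro allI impI)
  fix V X P V' X' P' x y
  assume a: "profile V X P \<and> profile V' X' P' \<and> coh_reduct x y V X P V' X' P' \<and> (x, y) \<in> sc V X P"
  have xX': "x \<in> X'" "y \<in> X'" and XX: "X' \<subseteq> X" and VV: "V' = V"
    and rs: "\<forall>i\<in>V. P i \<inter> ({x,y} \<times> {x,y}) = P' i \<inter> ({x,y} \<times> {x,y})"
    and mg: "\<forall>a\<in>X'. \<forall>b\<in>X'. {a,b} \<noteq> {x,y} \<and> margin V' P' a b > 0 \<longrightarrow> margin V P a b \<ge> margin V' P' a b"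
    using a unfolding coh_reduct_def by blast+
  have fV: "finite V" using a by (simp add: profile_def)
  let ?m = "margin V P x y"
  have xy: "?m > 0" "(y,x) \<notin> (G V X P ?m)\<^sup>+" using a by (auto simp: sc_iff)
  have "\<forall>i\<in>V. vt (P' i) x y = vt (P i) x y"
  proof
    fix i assume "i \<in> V"
    then have "P i \<inter> ({x,y} \<times> {x,y}) = P' i \<inter> ({x,y} \<times> {x,y})" using rs by blast
    then have "(x,y) \<in> P i \<longleftrightarrow> (x,y) \<in> P' i" "(y,x) \<in> P i \<longleftrightarrow> (y,x) \<in> P' i" by blast+
    then show "vt (P' i) x y = vt (P i) x y" by (simp add: vt_def)
  qed
  then have mxy: "margin V P' x y = ?m" using fV by (simp add: margin_sum)
  have sub: "G V X' P' ?m \<subseteq> G V X P ?m"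
  proof clarify
    fix u v assume uv: "(u,v) \<in> G V X' P' ?m"
    then have uvX: "u \<in> X'" "v \<in> X'" and g: "margin V P' u v \<ge> ?m" by (auto simp: G_def)
    show "(u,v) \<in> G V X P ?m"
    proof (cases "{u,v} = {x,y}")
      case True
      then have "(u = x \<and> v = y) \<or> (u = y \<and> v = x)" by (auto simp: doubleton_eq_iff)
      then show ?thesis
      proof
        assume "u = x \<and> v = y" then show ?thesis using g mxy uvX XX by (auto simp: G_def)
      next
        assume "u = y \<and> v = x"
        then have "margin V P' u v = - ?m" using mxy margin_swap[of V P' x y] by simp
        then show ?thesis using g xy by simp
      qed
    next
      case False
      then have "margin V P u v \<ge> margin V P' u v" using mg uvX g xy VV by force
      then show ?thesis using g uvX XX by (auto simp: G_def)
    qed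
  qed
  show "(x,y) \<in> sc V' X' P'"
    using xy xX' trancl_mono_subset[OF sub] mxy VV by (auto simp: sc_iff)
qed

lemma sc_positive_involvement: "positive_involvement_defeat sc"
  unfolding positive_involvement_defeat_def
proof (intro allI impI notI)
  fix V X P j R x y
  assume a: "profile V X P \<and> j \<notin> V \<and> swo X R \<and> (y, x) \<in> R \<and> (x, y) \<notin> sc V X P"
  assume b: "(x,y) \<in> sc (insert j V) X (P(j := R))"
  have fV: "finite V" using a by (simp add: profile_def)
  let ?P' = "P(j:=R)" and ?V' = "insert j V"
  have mv: "margin ?V' ?P' u v = margin V P u v + vt R u v" for u v using margin_insert fV a by metis
  have "vt R x y = -1" using a swo_asym[of X R y x] by (simp add: vt_def)
  then have mxy: "margin ?V' ?P' x y = margin V P x y - 1" using mv by simp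
  have vb: "vt R u v \<ge> -1" for u v by (simp add: vt_def)
  have bb: "x \<in> X" "y \<in> X" "margin ?V' ?P' x y > 0" "(y,x) \<notin> (G ?V' X ?P' (margin ?V' ?P' x y))\<^sup>+"
    using b by (auto simp: sc_iff)
  then have "(y,x) \<in> (G V X P (margin V P x y))\<^sup>+" using a mxy by (auto simp: sc_iff)
  moreover have "G V X P (margin V P x y) \<subseteq> G ?V' X ?P' (margin ?V' ?P' x y)"
  proof clarify
    fix u v assume "(u,v) \<in> G V X P (margin V P x y)"
    then show "(u,v) \<in> G ?V' X ?P' (margin ?V' ?P' x y)" using mv[of u v] vb[of u v] mxy by (auto simp: G_def)
  qed
  ultimately show False using bb trancl_mono by blast
qed



lemma split_trancl:
  assumes "(a,b) \<in> r\<^sup>+" "s \<subseteq> r"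
  shows "(a,b) \<in> s\<^sup>+ \<or> (\<exists>u v. (u,v) \<in> r \<and> (u,v) \<notin> s \<and> (a,u) \<in> r\<^sup>* \<and> (v,b) \<in> r\<^sup>*)"
  using assms(1)
proof (induction rule: trancl_induct)
  case (base y) then show ?case by auto
next
  case (step y z)
  from step.IH show ?case
  proof
    assume ay: "(a,y) \<in> s\<^sup>+"
    show ?thesis
    proof (cases "(y,z) \<in> s")
      case True then show ?thesis using ay by auto
    next
      case False
      have "(a,y) \<in> r\<^sup>*" using ay trancl_mono_subset[OF assms(2)] by auto
      moreover have "(y,z) \<in> r" using step by simp
      ultimately show ?thesis using False by (intro disjI2 exI[of _ y] exI[of _ z]) simp
    qed
  next
    assume "\<exists>u v. (u,v) \<in> r \<and> (u,v) \<notin> s \<and> (a,u) \<in> r\<^sup>* \<and> (v,y) \<in> r\<^sup>*"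
    then obtain u v where uv: "(u,v) \<in> r" "(u,v) \<notin> s" "(a,u) \<in> r\<^sup>*" "(v,y) \<in> r\<^sup>*" by blast
    have "(v,z) \<in> r\<^sup>*" using uv(4) step(2) by (rule rtrancl_into_rtrancl)
    then show ?thesis using uv by blast
  qed
qed

lemma margin_le_card: "finite V \<Longrightarrow> margin V P a b \<le> int (card V)"
proof -
  assume "finite V"
  then have "card {i\<in>V. (a,b) \<in> P i} \<le> card V" by (intro card_mono) auto
  then show ?thesis by (simp add: margin_def)
qed


lemma sc_D: "(x,y) \<in> sc V X P \<Longrightarrow> x \<in> X \<and> y \<in> X \<and> margin V P x y > 0"
  by (simp add: sc_iff)

lemma sc_acyclic:
  assumes "profile V X P"
  shows "acyclic (sc V X P)"
proof (rule ccontr)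
  let ?D = "sc V X P"
  define T where "T k = ?D \<inter> {(u,v). margin V P u v \<ge> int k}" for k :: nat
  define K where "K = {k. \<exists>a. (a,a) \<in> (T k)\<^sup>+}"
  have fV: "finite V" using assms by (simp add: profile_def)
  assume "\<not> acyclic ?D"
  then obtain a0 where "(a0,a0) \<in> ?D\<^sup>+" by (auto simp: acyclic_def)
  moreover have "T 1 = ?D" unfolding T_def using sc_D by fastforce
  ultimately have "1 \<in> K" by (auto simp: K_def)
  have Kb: "K \<subseteq> {..card V}"
  proof
    fix k assume "k \<in> K"
    then obtain a where "(a,a) \<in> (T k)\<^sup>+" by (auto simp: K_def)
    then obtain u v where "(u,v) \<in> T k" by (meson trancl.cases)
    then have "int k \<le> margin V P u v" by (auto simp: T_def)
    then show "k \<in> {..card V}" using margin_le_card[OF fV, of P u v] by simp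
  qed
  then have fK: "finite K" by (rule finite_subset) simp
  define k0 where "k0 = Max K"
  have k0K: "k0 \<in> K" using Max_in[OF fK] \<open>1 \<in> K\<close> by (auto simp: k0_def)
  have sk0: "Suc k0 \<notin> K"
  proof
    assume "Suc k0 \<in> K"
    then have "Suc k0 \<le> k0" unfolding k0_def using Max_ge[OF fK] by blast
    then show False by simp
  qed
  obtain a where aa: "(a,a) \<in> (T k0)\<^sup>+" using k0K by (auto simp: K_def)
  have "T (Suc k0) \<subseteq> T k0" by (auto simp: T_def)
  from split_trancl[OF aa this] sk0 obtain u v where uv: "(u,v) \<in> T k0" "(u,v) \<notin> T (Suc k0)"
    "(a,u) \<in> (T k0)\<^sup>*" "(v,a) \<in> (T k0)\<^sup>*" by (auto simp: K_def)
  have mu: "margin V P u v = int k0" and uvD: "(u,v) \<in> ?D" using uv by (auto simp: T_def)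
  have "u \<noteq> v" using sc_D[OF uvD] by auto
  have "(v,u) \<in> (T k0)\<^sup>*" using uv(4) uv(3) by (rule rtrancl_trans)
  then have "(v,u) \<in> (T k0)\<^sup>+" using \<open>u \<noteq> v\<close> by (auto simp: rtrancl_eq_or_trancl)
  moreover have "T k0 \<subseteq> G V X P (int k0)" unfolding T_def G_def using sc_D by fastforce
  ultimately have "(v,u) \<in> (G V X P (margin V P u v))\<^sup>+" using mu trancl_mono_subset by (metis subsetD)
  then show False using uvD by (simp add: sc_iff)
qed


lemma sc_sub: "sc V X P \<subseteq> X \<times> X"
proof
  fix p assume "p \<in> sc V X P"
  then show "p \<in> X \<times> X" using sc_D[of "fst p" "snd p" V X P] by (cases p) simp
qed

lemma sc_availability: "availability sc"
  unfolding availability_def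
proof (intro allI impI)
  fix V X P assume a: "profile V X P"
  have fX: "finite (X \<times> X)" using a by (simp add: profile_def)
  have fin: "finite (sc V X P)" using finite_subset[OF sc_sub fX] .
  have w: "wf (sc V X P)" using finite_acyclic_wf[OF fin sc_acyclic[OF a]] .
  obtain x0 where x0: "x0 \<in> X" using a by (auto simp: profile_def)
  have "\<exists>z\<in>X. \<forall>y. (y,z) \<in> sc V X P \<longrightarrow> y \<notin> X"
    using wf_eq_minimal[THEN iffD1, OF w, rule_format, OF x0] .
  then obtain z where z: "z \<in> X" "\<forall>y. (y,z) \<in> sc V X P \<longrightarrow> y \<notin> X" by blast
  have "\<forall>y. (y,z) \<notin> sc V X P"
  proof (intro allI notI)
    fix y assume "(y,z) \<in> sc V X P"
    then show False using z sc_sub by blast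
  qed
  then show "\<exists>x\<in>X. \<forall>y. (y,x) \<notin> sc V X P" using z(1) by blast
qed


locale cyc =
  fixes cs :: "'c list"
  assumes dist: "distinct cs" and len: "length cs \<ge> 3"
begin

definition nxt :: "nat \<Rightarrow> nat" where "nxt j = (if Suc j = length cs then 0 else Suc j)"
definition prv :: "nat \<Rightarrow> nat" where "prv j = (if j = 0 then length cs - 1 else j - 1)"
definition idx :: "'c \<Rightarrow> nat" where "idx z = (THE u. u < length cs \<and> cs ! u = z)"
definition pi :: "'c \<Rightarrow> 'c" where "pi z = cs ! nxt (idx z)"
definition rk2 :: "nat \<Rightarrow> nat \<Rightarrow> nat" where
  "rk2 j w = (if w = j then 2 else if w = nxt j then 1 else 0)"
definition rk1 :: "nat \<Rightarrow> nat \<Rightarrow> nat" where "rk1 j w = (if w = j then 1 else 0)"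
definition top2 :: "nat \<Rightarrow> ('c \<times> 'c) set" where
  "top2 j = rankrel (set cs) (\<lambda>z. if z = cs!j then 2 else if z = cs!(nxt j) then 1 else 0)"
definition top1 :: "nat \<Rightarrow> ('c \<times> 'c) set" where
  "top1 j = rankrel (set cs) (\<lambda>z. if z = cs!j then 1 else 0)"

lemma nxt_lt: "j < length cs \<Longrightarrow> nxt j < length cs" by (auto simp: nxt_def)
lemma prv_lt: "u < length cs \<Longrightarrow> prv u < length cs" by (auto simp: prv_def)
lemma nxt_prv: "u < length cs \<Longrightarrow> nxt (prv u) = u" using len by (auto simp: nxt_def prv_def)
lemma prv_nxt: "j < length cs \<Longrightarrow> prv (nxt j) = j" using len by (auto simp: nxt_def prv_def)
lemma nxt_inj: "u < length cs \<Longrightarrow> v < length cs \<Longrightarrow> nxt u = nxt v \<longleftrightarrow> u = v"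
  using len by (auto simp: nxt_def)
lemma nxt_neq: "nxt j \<noteq> j" using len by (auto simp: nxt_def)
lemma nth_eq: "u < length cs \<Longrightarrow> v < length cs \<Longrightarrow> cs!u = cs!v \<longleftrightarrow> u = v"
  using dist by (simp add: nth_eq_iff_index_eq)
lemma idx_nth: "u < length cs \<Longrightarrow> idx (cs!u) = u"
  unfolding idx_def by (rule the_equality) (auto simp: nth_eq)
lemma in_set_nth: "z \<in> set cs \<Longrightarrow> \<exists>u < length cs. z = cs!u"
  by (auto simp: in_set_conv_nth)
lemma pi_nth: "u < length cs \<Longrightarrow> pi (cs!u) = cs!(nxt u)"
  by (simp add: pi_def idx_nth)

lemma bij_pi: "bij_betw pi (set cs) (set cs)"
proof (rule bij_betw_imageI)
  show "inj_on pi (set cs)"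
  proof
    fix a b assume "a \<in> set cs" "b \<in> set cs" "pi a = pi b"
    then obtain u v where "u < length cs" "v < length cs" "a = cs!u" "b = cs!v" "pi a = pi b"
      using in_set_nth by metis
    then show "a = b" by (simp add: pi_nth nth_eq nxt_lt nxt_inj)
  qed
  show "pi ` set cs = set cs"
  proof
    show "pi ` set cs \<subseteq> set cs"
    proof
      fix w assume "w \<in> pi ` set cs"
      then obtain z where z: "z \<in> set cs" "w = pi z" by blast
      then obtain u where u: "u < length cs" "z = cs!u" using in_set_nth by blast
      then show "w \<in> set cs" using z by (simp add: pi_nth nxt_lt)
    qed
    show "set cs \<subseteq> pi ` set cs"
    proof
      fix z assume "z \<in> set cs"
      then obtain u where u: "u < length cs" "z = cs!u" using in_set_nth by blast
      then have "z = pi (cs ! prv u)" by (simp add: pi_nth prv_lt nxt_prv)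
      then show "z \<in> pi ` set cs" using u prv_lt by auto
    qed
  qed
qed

lemma swo_top2: "swo (set cs) (top2 j)" by (simp add: top2_def swo_rankrel)
lemma swo_top1: "swo (set cs) (top1 j)" by (simp add: top1_def swo_rankrel)

lemma rank2_nth: "u < length cs \<Longrightarrow> j < length cs \<Longrightarrow>
   (if cs!u = cs!j then 2 else if cs!u = cs!(nxt j) then 1 else 0) = rk2 j u"
  by (simp add: rk2_def nth_eq nxt_lt)
lemma rank1_nth: "u < length cs \<Longrightarrow> j < length cs \<Longrightarrow>
   (if cs!u = cs!j then 1 else 0) = rk1 j u"
  by (simp add: rk1_def nth_eq)

lemma mem_top2: "u < length cs \<Longrightarrow> v < length cs \<Longrightarrow> j < length cs \<Longrightarrow>
   (cs!u, cs!v) \<in> top2 j \<longleftrightarrow> rk2 j v < rk2 j u"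
  unfolding top2_def rankrel_def using rank2_nth[of u j] rank2_nth[of v j] by simp
lemma mem_top1: "u < length cs \<Longrightarrow> v < length cs \<Longrightarrow> j < length cs \<Longrightarrow>
   (cs!u, cs!v) \<in> top1 j \<longleftrightarrow> rk1 j v < rk1 j u"
  unfolding top1_def rankrel_def using rank1_nth[of u j] rank1_nth[of v j] by simp

lemma vt_top2: "u < length cs \<Longrightarrow> v < length cs \<Longrightarrow> j < length cs \<Longrightarrow>
   vt (top2 j) (cs!u) (cs!v) = (if rk2 j v < rk2 j u then 1 else 0) - (if rk2 j u < rk2 j v then 1 else 0)"
  by (simp add: vt_def mem_top2)
lemma vt_top1: "u < length cs \<Longrightarrow> v < length cs \<Longrightarrow> j < length cs \<Longrightarrow>
   vt (top1 j) (cs!u) (cs!v) = (if rk1 j v < rk1 j u then 1 else 0) - (if rk1 j u < rk1 j v then 1 else 0)"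
  by (simp add: vt_def mem_top1)


lemma equiv_top2:
  assumes "j < length cs" "a \<in> set cs" "b \<in> set cs"
  shows "(a,b) \<in> top2 j \<longleftrightarrow> (pi a, pi b) \<in> top2 (nxt j)"
proof -
  obtain u v where uv: "u < length cs" "v < length cs" "a = cs!u" "b = cs!v" using assms in_set_nth by metis
  have "rk2 (nxt j) (nxt w) = rk2 j w" if "w < length cs" for w
    using that assms(1) nxt_lt by (simp add: rk2_def nxt_inj)
  then show ?thesis using uv assms(1) by (simp add: pi_nth mem_top2 nxt_lt)
qed

lemma equiv_top1:
  assumes "j < length cs" "a \<in> set cs" "b \<in> set cs"
  shows "(a,b) \<in> top1 j \<longleftrightarrow> (pi a, pi b) \<in> top1 (nxt j)"
proof -
  obtain u v where uv: "u < length cs" "v < length cs" "a = cs!u" "b = cs!v" using assms in_set_nth by metis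
  have "rk1 (nxt j) (nxt w) = rk1 j w" if "w < length cs" for w
    using that assms(1) nxt_lt by (simp add: rk1_def nxt_inj)
  then show ?thesis using uv assms(1) by (simp add: pi_nth mem_top1 nxt_lt)
qed


lemma nxt_eq_iff: "u < length cs \<Longrightarrow> j < length cs \<Longrightarrow> (u = nxt j) \<longleftrightarrow> (j = prv u)"
  using len by (auto simp: nxt_def prv_def)

lemma sum_ind_eq: "u < length cs \<Longrightarrow> (\<Sum>j<length cs. (if u = j then 1 else 0) :: int) = 1"
  by (simp add: sum.delta)

lemma sum_ind_nxt: assumes "u < length cs" "v < length cs"
  shows "(\<Sum>j<length cs. (if u = nxt j \<and> v \<noteq> j then 1 else 0) :: int) = (if prv u = v then 0 else 1)"
proof -
  have eq: "(u = nxt j \<and> v \<noteq> j) \<longleftrightarrow> (j = prv u \<and> prv u \<noteq> v)" if "j < length cs" for j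
    using nxt_eq_iff[OF assms(1) that] by auto
  have "(\<Sum>j<length cs. (if u = nxt j \<and> v \<noteq> j then 1 else 0) :: int)
      = (\<Sum>j<length cs. (if j = prv u then (if prv u \<noteq> v then 1 else 0) else 0))"
  proof (intro sum.cong refl)
    fix j assume "j \<in> {..<length cs}"
    then have "j < length cs" by simp
    then show "(if u = nxt j \<and> v \<noteq> j then 1 else 0) = (if j = prv u then (if prv u \<noteq> v then 1 else 0) else (0::int))"
      using eq by simp
  qed
  also have "\<dots> = (if prv u \<noteq> v then 1 else 0)" using prv_lt[OF assms(1)] by (simp add: sum.delta')
  finally show ?thesis by simp
qed


lemma vt_top2_expand:
  assumes "u < length cs" "v < length cs" "u \<noteq> v" "j < length cs"
  shows "vt (top2 j) (cs!u) (cs!v) = (if u = j then 1 else 0) + (if u = nxt j \<and> v \<noteq> j then 1 else 0)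
      - (if v = j then 1 else 0) - (if v = nxt j \<and> u \<noteq> j then 1 else 0)"
proof -
  have "nxt j \<noteq> j" by (rule nxt_neq)
  then show ?thesis using assms(3) unfolding vt_top2[OF assms(1,2,4)] rk2_def
    by (cases "u = j"; cases "v = j"; cases "u = nxt j"; cases "v = nxt j") simp_all
qed

lemma sum_vt_top2:
  assumes "u < length cs" "v < length cs" "u \<noteq> v"
  shows "(\<Sum>j<length cs. vt (top2 j) (cs!u) (cs!v)) = (if nxt u = v then 1 else 0) - (if nxt v = u then 1 else 0)"
proof -
  let ?A = "\<lambda>j. (if u = j then 1 else 0) :: int"
  let ?B = "\<lambda>j. (if u = nxt j \<and> v \<noteq> j then 1 else 0) :: int"
  let ?C = "\<lambda>j. (if v = j then 1 else 0) :: int"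
  let ?D = "\<lambda>j. (if v = nxt j \<and> u \<noteq> j then 1 else 0) :: int"
  have "(\<Sum>j<length cs. vt (top2 j) (cs!u) (cs!v)) = (\<Sum>j<length cs. ?A j + ?B j - ?C j - ?D j)"
    using vt_top2_expand[OF assms] by (intro sum.cong refl) simp
  also have "\<dots> = sum ?A {..<length cs} + sum ?B {..<length cs} - sum ?C {..<length cs} - sum ?D {..<length cs}"
    by (simp only: sum.distrib sum_subtractf)
  also have "\<dots> = (if prv u = v then 0 else 1) - (if prv v = u then 0 else 1)"
    using sum_ind_eq[OF assms(1)] sum_ind_eq[OF assms(2)] sum_ind_nxt[OF assms(1,2)] sum_ind_nxt[OF assms(2,1)]
    by simp
  also have "\<dots> = (if nxt u = v then 1 else 0) - (if nxt v = u then 1 else 0)"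
  proof -
    have h1: "(prv u = v) = (nxt v = u)" using nxt_eq_iff[OF assms(1,2)] by auto
    have h2: "(prv v = u) = (nxt u = v)" using nxt_eq_iff[OF assms(2,1)] by auto
    show ?thesis unfolding h1 h2 by simp
  qed
  finally show ?thesis .
qed

lemma sum_vt_top1:
  assumes "u < length cs" "v < length cs" "u \<noteq> v"
  shows "(\<Sum>j<length cs. vt (top1 j) (cs!u) (cs!v)) = 0"
proof -
  have e: "vt (top1 j) (cs!u) (cs!v) = (if u = j then 1 else 0) - (if v = j then 1 else 0)" if "j < length cs" for j
    using assms that by (simp add: vt_top1 rk1_def)
  show ?thesis using assms by (simp add: e sum_subtractf sum_ind_eq)
qed

lemma pat_top2:
  assumes "j < length cs"
  shows "(cs!0, cs!1) \<in> top2 j \<longleftrightarrow> (j = 0 \<or> j = length cs - 1)"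
    "(cs!1, cs!0) \<in> top2 j \<longleftrightarrow> j = 1"
proof -
  have n: "0 < length cs" "1 < length cs" using len by auto
  have r0: "rk2 j 0 = (if j = 0 then 2 else if j = length cs - 1 then 1 else 0)"
    using len assms by (auto simp: rk2_def nxt_def)
  have r1: "rk2 j 1 = (if j = 1 then 2 else if j = 0 then 1 else 0)"
    using len assms by (auto simp: rk2_def nxt_def)
  show "(cs!0, cs!1) \<in> top2 j \<longleftrightarrow> (j = 0 \<or> j = length cs - 1)"
    unfolding mem_top2[OF n(1) n(2) assms] r0 r1 using len by auto
  show "(cs!1, cs!0) \<in> top2 j \<longleftrightarrow> j = 1"
    unfolding mem_top2[OF n(2) n(1) assms] r0 r1 using len by auto
qed

lemma pat_top1:
  assumes "j < length cs"
  shows "(cs!0, cs!1) \<in> top1 j \<longleftrightarrow> j = 0"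
    "(cs!1, cs!0) \<in> top1 j \<longleftrightarrow> j = 1"
proof -
  have n: "0 < length cs" "1 < length cs" using len by auto
  show "(cs!0, cs!1) \<in> top1 j \<longleftrightarrow> j = 0"
    unfolding mem_top1[OF n(1) n(2) assms] by (auto simp: rk1_def)
  show "(cs!1, cs!0) \<in> top1 j \<longleftrightarrow> j = 1"
    unfolding mem_top1[OF n(2) n(1) assms] by (auto simp: rk1_def)
qed

end


lemma fiber_bij:
  assumes fA: "finite A" and fB: "finite B" and c: "\<And>k. card {a\<in>A. g a = k} = card {b\<in>B. h b = k}"
  shows "\<exists>\<tau>. bij_betw \<tau> A B \<and> (\<forall>a\<in>A. h (\<tau> a) = g a)"
proof -
  have "\<forall>k. \<exists>\<phi>. bij_betw \<phi> {a\<in>A. g a = k} {b\<in>B. h b = k}"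
  proof
    fix k
    show "\<exists>\<phi>. bij_betw \<phi> {a\<in>A. g a = k} {b\<in>B. h b = k}"
      by (rule finite_same_card_bij) (use fA fB c in auto)
  qed
  from choice[OF this] obtain \<phi> where \<phi>0: "\<forall>k. bij_betw (\<phi> k) {a\<in>A. g a = k} {b\<in>B. h b = k}"
    by blast
  have \<phi>: "bij_betw (\<phi> k) {a\<in>A. g a = k} {b\<in>B. h b = k}" for k using \<phi>0 by blast
  define \<tau> where "\<tau> a = \<phi> (g a) a" for a
  have t1: "\<tau> a \<in> B \<and> h (\<tau> a) = g a" if "a \<in> A" for a
  proof -
    have "a \<in> {z\<in>A. g z = g a}" using that by simp
    then have "\<phi> (g a) a \<in> {b\<in>B. h b = g a}" using \<phi>[of "g a"] by (auto simp: bij_betw_def)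
    then show ?thesis by (simp add: \<tau>_def)
  qed
  have inj: "inj_on \<tau> A"
  proof
    fix a a' assume aa: "a \<in> A" "a' \<in> A" "\<tau> a = \<tau> a'"
    have "h (\<tau> a) = g a" "h (\<tau> a') = g a'" using t1 aa(1,2) by auto
    then have gg: "g a = g a'" using aa(3) by simp
    have m: "a \<in> {z\<in>A. g z = g a}" "a' \<in> {z\<in>A. g z = g a}" using aa gg by auto
    have e: "\<phi> (g a) a = \<phi> (g a) a'" using aa(3) gg by (simp add: \<tau>_def)
    show "a = a'" using inj_onD[OF bij_betw_imp_inj_on[OF \<phi>[of "g a"]] e m] .
  qed
  have surj: "\<tau> ` A = B"
  proof
    show "\<tau> ` A \<subseteq> B" using t1 by auto
    show "B \<subseteq> \<tau> ` A"
    proof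
      fix b assume b: "b \<in> B"
      then have "b \<in> {z\<in>B. h z = h b}" by simp
      then have "b \<in> \<phi> (h b) ` {a\<in>A. g a = h b}" using bij_betw_imp_surj_on[OF \<phi>[of "h b"]] by simp
      then obtain a where a: "a \<in> {a\<in>A. g a = h b}" "b = \<phi> (h b) a" by (rule imageE)
      then have "\<tau> a = b" by (simp add: \<tau>_def)
      then show "b \<in> \<tau> ` A" using a by auto
    qed
  qed
  have "bij_betw \<tau> A B" using inj surj by (simp add: bij_betw_def)
  then show ?thesis using t1 by blast
qed

lemma profile_insert:
  assumes "profile V X P" "j \<notin> V" "swo X R"
  shows "profile (insert j V) X (P(j:=R))"
  using assms unfolding profile_def by auto

lemma swo_restrict: "swo X R \<Longrightarrow> Y \<subseteq> X \<Longrightarrow> swo Y (R \<inter> (Y \<times> Y))"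
  unfolding swo_def trans_def by blast

lemma swo_empty: "swo X {}" unfolding swo_def trans_def by auto

lemma fresh: "infinite (UNIV :: 'v set) \<Longrightarrow> finite (V :: 'v set) \<Longrightarrow> \<exists>j. j \<notin> V"
  using ex_new_if_finite by blast

lemma add_voters:
  fixes f :: "('v,'c) vccr"
  assumes inf: "infinite (UNIV :: 'v set)" and pid: "positive_involvement_defeat f"
    and L: "swo X L" "(y,x) \<in> L"
  shows "profile V X P \<Longrightarrow> \<exists>V' P'. profile V' X P' \<and>
     (\<forall>a b. margin V' P' a b = margin V P a b + int k * vt L a b) \<and>
     ((x,y) \<in> f V' X P' \<longrightarrow> (x,y) \<in> f V X P)"
proof (induction k arbitrary: V P)
  case 0
  then show ?case by (intro exI[of _ V] exI[of _ P]) auto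
next
  case (Suc k)
  have fV: "finite V" using Suc.prems by (simp add: profile_def)
  obtain j where j: "j \<notin> V" using fresh[OF inf fV] by blast
  let ?V1 = "insert j V" and ?P1 = "P(j:=L)"
  have p1: "profile ?V1 X ?P1" using profile_insert[OF Suc.prems j L(1)] .
  obtain V' P' where V': "profile V' X P'" "\<forall>a b. margin V' P' a b = margin ?V1 ?P1 a b + int k * vt L a b"
    "(x,y) \<in> f V' X P' \<longrightarrow> (x,y) \<in> f ?V1 X ?P1" using Suc.IH[OF p1] by blast
  have m: "margin V' P' a b = margin V P a b + int (Suc k) * vt L a b" for a b
    using V'(2) margin_insert[OF fV j, of P L a b] by (simp add: algebra_simps)
  have "(x,y) \<in> f ?V1 X ?P1 \<longrightarrow> (x,y) \<in> f V X P"
    using pid Suc.prems j L unfolding positive_involvement_defeat_def by blast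
  then show ?case using V' m by blast
qed

lemma mp_trancl:
  assumes "majority_path V X P p"
  shows "(hd p, last p) \<in> (G V X P 1)\<^sup>+"
proof -
  have l: "length p \<ge> 2" and s: "set p \<subseteq> X" and e: "\<forall>k. Suc k < length p \<longrightarrow> margin V P (p!k) (p!Suc k) > 0"
    using assms by (auto simp: majority_path_def)
  have "successively (\<lambda>u v. (u,v) \<in> G V X P 1) p"
    unfolding successively_conv_nth
  proof (intro allI impI)
    fix i assume i: "Suc i < length p"
    then have "p!i \<in> X" "p!Suc i \<in> X" using s by auto
    then show "(p!i, p!Suc i) \<in> G V X P 1" using e i by (auto simp: G_def)
  qed
  then show ?thesis using path_trancl l by blast
qed

lemma trancl_closed:
  assumes "(a,b) \<in> r\<^sup>+" "a \<in> A" "\<And>u v. (u,v) \<in> r \<Longrightarrow> u \<in> A \<Longrightarrow> v \<in> A"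
  shows "b \<in> A"
  using assms(1)
proof (induction rule: trancl_induct)
  case (base y) then show ?case using assms by blast
next
  case (step y z) then show ?case using assms by blast
qed

lemma sc_sub_f:
  fixes f :: "('v,'c) vccr"
  assumes inf: "infinite (UNIV :: 'v set)" and cd: "coherent_defeat f"
    and pid: "positive_involvement_defeat f" and pr: "profile V X P"
    and xy: "(x,y) \<in> sc V X P"
  shows "(x,y) \<in> f V X P"
proof -
  let ?m = "margin V P x y"
  have xX: "x \<in> X" "y \<in> X" and mpos: "?m > 0" and nt: "(y,x) \<notin> (G V X P ?m)\<^sup>+"
    using xy by (auto simp: sc_iff)
  have xny: "x \<noteq> y" using mpos by auto
  define A where "A = {z. (y,z) \<in> (G V X P ?m)\<^sup>*}"
  have yA: "y \<in> A" by (simp add: A_def)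
  have xA: "x \<notin> A" using nt xny by (auto simp: A_def rtrancl_eq_or_trancl)
  define rk where "rk z = (if z \<in> A then (if z = y then 2 else 0) else (if z = x then 1 else 3::nat))" for z
  define L where "L = rankrel X rk"
  have sL: "swo X L" by (simp add: L_def swo_rankrel)
  have yxL: "(y,x) \<in> L" using xX xA yA by (simp add: L_def rankrel_def rk_def)
  obtain V' P' where V': "profile V' X P'" "\<forall>a b. margin V' P' a b = margin V P a b + int (nat (?m - 1)) * vt L a b"
    "(x,y) \<in> f V' X P' \<longrightarrow> (x,y) \<in> f V X P"
    using add_voters[OF inf pid sL yxL pr] by blast
  have km: "int (nat (?m - 1)) = ?m - 1" using mpos by simp
  have mg: "margin V' P' a b = margin V P a b + (?m - 1) * vt L a b" for a b using V'(2) km by simp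
  have vxy: "vt L x y = -1" using xX xA yA xny by (simp add: L_def vt_rankrel rk_def)
  have m1: "margin V' P' x y = 1" using mg[of x y] vxy by simp
  have closed: "v \<in> A" if uv: "(u,v) \<in> G V' X P' 1" and uA: "u \<in> A" for u v
  proof (rule ccontr)
    assume vA: "v \<notin> A"
    have uvX: "u \<in> X" "v \<in> X" and g1: "margin V' P' u v \<ge> 1" using uv by (auto simp: G_def)
    show False
    proof (cases "u = y \<and> v = x")
      case True
      have "vt L y x = 1" using vxy vt_swap[of L y x] by simp
      then have "margin V' P' y x = - ?m + (?m - 1)" using mg[of y x] margin_swap[of V P y x] True by simp
      then show ?thesis using g1 True by simp
    next
      case False
      have "rk u < rk v" using uA vA False by (auto simp: rk_def)
      then have vt: "vt L u v = -1" using uvX by (simp add: L_def vt_rankrel)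
      have "margin V P u v < ?m"
      proof (rule ccontr)
        assume "\<not> margin V P u v < ?m"
        then have "(u,v) \<in> G V X P ?m" using uvX by (simp add: G_def)
        then have "(y,v) \<in> (G V X P ?m)\<^sup>*" using uA by (simp add: A_def rtrancl_into_rtrancl)
        then show False using vA by (simp add: A_def)
      qed
      then show ?thesis using mg[of u v] vt g1 by simp
    qed
  qed
  have "\<not> (\<exists>p. majority_path V' X P' p \<and> hd p = y \<and> last p = x)"
  proof
    assume "\<exists>p. majority_path V' X P' p \<and> hd p = y \<and> last p = x"
    then obtain p where p: "majority_path V' X P' p" "hd p = y" "last p = x" by blast
    have "(y,x) \<in> (G V' X P' 1)\<^sup>+" using mp_trancl[OF p(1)] p by simp
    then have "x \<in> A" using trancl_closed[of y x _ A] yA closed by blast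
    then show False using xA by simp
  qed
  then have "(x,y) \<in> f V' X P'" using cd V'(1) xX m1 unfolding coherent_defeat_def by auto
  then show ?thesis using V'(3) by blast
qed



lemma swo2:
  assumes "swo {x,y} R"
  shows "R = {} \<or> R = {(x,y)} \<or> R = {(y,x)}"
proof -
  have sub: "R \<subseteq> {(x,y),(y,x)}" using assms unfolding swo_def by auto
  have nb: "\<not> ((x,y) \<in> R \<and> (y,x) \<in> R)" using swo_asym[OF assms] by blast
  show ?thesis
  proof (cases "(x,y) \<in> R")
    case True
    then have "R = {(x,y)}" using sub nb by auto
    then show ?thesis by simp
  next
    case False
    show ?thesis
    proof (cases "(y,x) \<in> R")
      case True then have "R = {(y,x)}" using sub False by auto
      then show ?thesis by simp
    next
      case F2: False then have "R = {}" using sub False by auto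
      then show ?thesis by simp
    qed
  qed
qed

lemma f_margin_pos:
  fixes f :: "('v,'c) vccr"
  assumes vc: "is_vccr f" and an: "anonymity f" and ne: "neutrality f" and iia: "coherent_IIA f"
    and cd: "coherent_defeat f" and pr: "profile V X P" and xy: "(x,y) \<in> f V X P"
  shows "margin V P x y > 0"
proof (rule ccontr)
  assume npos: "\<not> margin V P x y > 0"
  have xX: "x \<in> X" "y \<in> X" using vc pr xy unfolding is_vccr_def by blast+
  have asym: "\<And>V X P a b. profile V X P \<Longrightarrow> (a,b) \<in> f V X P \<Longrightarrow> (b,a) \<notin> f V X P"
    using vc unfolding is_vccr_def by blast
  have xny: "x \<noteq> y" using asym[OF pr xy] xy by blast
  define Y where "Y = {x,y}"
  define Q where "Q i = (if i \<in> V then P i \<inter> (Y \<times> Y) else {})" for i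
  have fV: "finite V" and VV: "V \<noteq> {}" using pr by (auto simp: profile_def)
  have YX: "Y \<subseteq> X" using xX by (auto simp: Y_def)
  have swoQ: "swo Y (Q i)" if "i \<in> V" for i
    using swo_restrict[of X "P i" Y] pr that YX by (simp add: Q_def profile_def)
  have prQ: "profile V Y Q" using fV VV swoQ by (auto simp: profile_def Q_def Y_def)
  have coh: "coh_reduct x y V X P V Y Q"
    unfolding coh_reduct_def
  proof (intro conjI ballI impI)
    show "x \<in> Y" "y \<in> Y" "Y \<subseteq> X" "V = V" using YX by (auto simp: Y_def)
    show "P i \<inter> ({x, y} \<times> {x, y}) = Q i \<inter> ({x, y} \<times> {x, y})" if "i \<in> V" for i
      using that by (auto simp: Q_def Y_def)
    fix a b assume ab: "a \<in> Y" "b \<in> Y" "{a, b} \<noteq> {x, y} \<and> 0 < margin V Q a b"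
    then have "a = b" by (auto simp: Y_def)
    then show "margin V Q a b \<le> margin V P a b" using ab by simp
  qed
  have fQ: "(x,y) \<in> f V Y Q" using iia pr prQ coh xy unfolding coherent_IIA_def by blast
  have vq: "vt (Q i) x y = vt (P i) x y" if "i \<in> V" for i
    using that by (simp add: vt_def Q_def Y_def)
  have mQ: "margin V Q x y = margin V P x y" using fV vq by (simp add: margin_sum)
  show False
  proof (cases "margin V P x y < 0")
    case True
    have myx: "margin V Q y x > 0" using True mQ margin_swap[of V Q y x] by simp
    have "\<not> (\<exists>p. majority_path V Y Q p \<and> hd p = x \<and> last p = y)"
    proof
      assume "\<exists>p. majority_path V Y Q p \<and> hd p = x \<and> last p = y"
      then obtain p where p: "majority_path V Y Q p" "hd p = x" by blast
      have l: "length p \<ge> 2" and s: "set p \<subseteq> Y" and e: "margin V Q (p!0) (p!Suc 0) > 0"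
        using p(1) unfolding majority_path_def by auto
      have p0: "p!0 = x" using p(2) l by (cases p) auto
      have "p!1 \<in> Y" using s l by auto
      then have "p!1 = x \<or> p!1 = y" by (auto simp: Y_def)
      then show False using e p0 mQ True by auto
    qed
    then have "(y,x) \<in> f V Y Q" using cd prQ myx unfolding coherent_defeat_def by (auto simp: Y_def)
    then show False using asym[OF prQ fQ] by blast
  next
    case False
    then have m0: "margin V P x y = 0" using npos by simp
    define sw where "sw R = (if R = {(x,y)} then {(y,x)} else if R = {(y,x)} then {(x,y)} else R)" for R :: "('c \<times> 'c) set"
    have swsw: "sw (sw R) = R" for R using xny by (auto simp: sw_def)
    have sweq: "(sw a = K) \<longleftrightarrow> (a = sw K)" for a K
    proof
      assume "sw a = K" then show "a = sw K" using swsw[of a] by simp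
    next
      assume "a = sw K" then show "sw a = K" using swsw[of K] by simp
    qed
    have Q3: "Q i = {} \<or> Q i = {(x,y)} \<or> Q i = {(y,x)}" if "i \<in> V" for i
      using swo2[of x y "Q i"] swoQ[OF that] by (simp add: Y_def)
    have e1: "{i\<in>V. (x,y) \<in> P i} = {i\<in>V. Q i = {(x,y)}}"
    proof -
      have "(x,y) \<in> P i \<longleftrightarrow> Q i = {(x,y)}" if "i \<in> V" for i
      proof -
        have "(x,y) \<in> P i \<longleftrightarrow> (x,y) \<in> Q i" using that by (simp add: Q_def Y_def)
        also have "\<dots> \<longleftrightarrow> Q i = {(x,y)}" using Q3[OF that] xny by auto
        finally show ?thesis .
      qed
      then show ?thesis by auto
    qed
    have e2: "{i\<in>V. (y,x) \<in> P i} = {i\<in>V. Q i = {(y,x)}}"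
    proof -
      have "(y,x) \<in> P i \<longleftrightarrow> Q i = {(y,x)}" if "i \<in> V" for i
      proof -
        have "(y,x) \<in> P i \<longleftrightarrow> (y,x) \<in> Q i" using that by (simp add: Q_def Y_def)
        also have "\<dots> \<longleftrightarrow> Q i = {(y,x)}" using Q3[OF that] xny by auto
        finally show ?thesis .
      qed
      then show ?thesis by auto
    qed
    have ceq: "card {i\<in>V. Q i = {(x,y)}} = card {i\<in>V. Q i = {(y,x)}}"
      using m0 e1 e2 by (simp add: margin_def)
    have cards: "card {i\<in>V. Q i = K} = card {i\<in>V. sw (Q i) = K}" for K
    proof -
      have "{i\<in>V. sw (Q i) = K} = {i\<in>V. Q i = sw K}" using sweq by auto
      moreover have "card {i\<in>V. Q i = K} = card {i\<in>V. Q i = sw K}"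
      proof (cases "K = {(x,y)}")
        case True then show ?thesis using ceq by (simp add: sw_def)
      next
        case F1: False
        show ?thesis
        proof (cases "K = {(y,x)}")
          case True then show ?thesis using ceq xny by (simp add: sw_def)
        next
          case False then show ?thesis using F1 by (simp add: sw_def)
        qed
      qed
      ultimately show ?thesis by simp
    qed
    obtain \<tau> where tau: "bij_betw \<tau> V V" "\<forall>i\<in>V. sw (Q (\<tau> i)) = Q i"
      using fiber_bij[OF fV fV cards] by blast
    have tQ: "Q (\<tau> i) = sw (Q i)" if "i \<in> V" for i using tau(2) that sweq by blast
    have tV: "\<tau> i \<in> V" if "i \<in> V" for i using tau(1) that by (auto simp: bij_betw_def)
    define Q' where "Q' i = (if i \<in> V then Q (\<tau> i) else {})" for i
    have prQ': "profile V Y Q'" using fV VV swoQ tV by (auto simp: profile_def Q'_def Y_def)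
    have qq: "\<forall>i\<in>V. Q' i = Q (\<tau> i)" by (simp add: Q'_def)
    have fQQ: "f V Y Q = f V Y Q'"
      using an[unfolded anonymity_def, rule_format, OF conjI[OF prQ conjI[OF prQ' conjI[OF tau(1) qq]]]] .
    define \<pi> where "\<pi> z = (if z = x then y else if z = y then x else z)" for z
    have bp: "bij_betw \<pi> Y Y"
    proof (rule bij_betw_imageI)
      show "inj_on \<pi> Y" by (auto simp: inj_on_def \<pi>_def Y_def)
      show "\<pi> ` Y = Y" by (auto simp: \<pi>_def Y_def)
    qed
    have rel: "\<forall>i\<in>V. \<forall>a\<in>Y. \<forall>b\<in>Y. (a,b) \<in> Q i \<longleftrightarrow> (\<pi> a, \<pi> b) \<in> Q' i"
    proof (intro ballI)
      fix i a b assume i: "i \<in> V" and ab: "a \<in> Y" "b \<in> Y"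
      have q': "Q' i = sw (Q i)" using i tQ by (simp add: Q'_def)
      show "(a,b) \<in> Q i \<longleftrightarrow> (\<pi> a, \<pi> b) \<in> Q' i"
        using Q3[OF i] ab xny unfolding q' by (auto simp: sw_def \<pi>_def Y_def)
    qed
    have "(x,y) \<in> f V Y Q \<longleftrightarrow> (\<pi> x, \<pi> y) \<in> f V Y Q'"
      using ne[unfolded neutrality_def, rule_format, OF conjI[OF prQ conjI[OF prQ' conjI[OF bp rel]]], of x y]
      by (simp add: Y_def)
    then have "(y,x) \<in> f V Y Q" using fQ fQQ xny by (simp add: \<pi>_def)
    then show False using asym[OF prQ fQ] by blast
  qed
qed



lemma swo_converse: "swo X R \<Longrightarrow> swo X (R\<inverse>)"
  unfolding swo_def trans_def by blast

lemma add_pairs: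
  fixes f :: "('v,'c) vccr"
  assumes inf: "infinite (UNIV :: 'v set)" and nr: "neutral_reversal f" and R: "swo X R"
  shows "profile V X P \<Longrightarrow> \<exists>V' P'. profile V' X P' \<and> f V' X P' = f V X P \<and>
     (\<forall>a b. margin V' P' a b = margin V P a b) \<and> int (card V') = int (card V) + 2 * int k \<and>
     (\<forall>Q. int (card {i\<in>V'. Q (P' i)}) = int (card {i\<in>V. Q (P i)}) +
          int k * ((if Q R then 1 else 0) + (if Q (R\<inverse>) then 1 else 0)))"
proof (induction k arbitrary: V P)
  case 0
  then show ?case by (intro exI[of _ V] exI[of _ P]) auto
next
  case (Suc k)
  have fV: "finite V" using Suc.prems by (simp add: profile_def)
  obtain j where j: "j \<notin> V" using fresh[OF inf fV] by blast
  have fV': "finite (insert j V)" using fV by simp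
  obtain k' where k': "k' \<notin> insert j V" using fresh[OF inf fV'] by blast
  have jk: "j \<noteq> k'" "k' \<notin> V" using k' by auto
  let ?V1 = "insert j (insert k' V)" and ?P1 = "P(j := R, k' := R\<inverse>)"
  have eqP: "?P1 = (P(k' := R\<inverse>))(j := R)" using jk by (simp add: fun_upd_twist)
  have p0: "profile (insert k' V) X (P(k' := R\<inverse>))"
    using profile_insert[OF Suc.prems jk(2) swo_converse[OF R]] .
  have p1: "profile ?V1 X ?P1" unfolding eqP
    using profile_insert[OF p0 _ R, of j] j jk by simp
  have fr: "f ?V1 X ?P1 = f V X P" using nr Suc.prems j jk R unfolding neutral_reversal_def by blast
  have fin0: "finite (insert k' V)" using fV by simp
  have jn: "j \<notin> insert k' V" using j jk by simp
  have mg: "margin ?V1 ?P1 a b = margin V P a b" for a b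
  proof -
    have "margin ?V1 ?P1 a b = margin (insert k' V) (P(k' := R\<inverse>)) a b + vt R a b"
      unfolding eqP by (rule margin_insert[OF fin0 jn])
    also have "\<dots> = margin V P a b + vt (R\<inverse>) a b + vt R a b"
      using margin_insert[OF fV jk(2), of P "R\<inverse>" a b] by simp
    finally show ?thesis by simp
  qed
  have cV: "card ?V1 = card V + 2" using fV j jk by simp
  have cQ: "int (card {i\<in>?V1. Q (?P1 i)}) = int (card {i\<in>V. Q (P i)}) +
          ((if Q R then 1 else 0) + (if Q (R\<inverse>) then 1 else 0))" for Q
  proof -
    define F where "F i = (if Q (?P1 i) then 1 else (0::int))" for i
    have fV1: "finite ?V1" using fV by simp
    have "int (card {i\<in>?V1. Q (?P1 i)}) = sum F ?V1"
      unfolding F_def by (rule card_filter_int[OF fV1])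
    also have "sum F ?V1 = F j + sum F (insert k' V)" by (rule sum.insert) (use fV jn in auto)
    also have "sum F (insert k' V) = F k' + sum F V" by (rule sum.insert) (use fV jk in auto)
    also have "sum F V = (\<Sum>i\<in>V. if Q (P i) then 1 else (0::int))"
      unfolding F_def using j jk by (intro sum.cong refl) auto
    also have "\<dots> = int (card {i\<in>V. Q (P i)})" by (rule card_filter_int[OF fV, symmetric])
    finally have fin: "int (card {i\<in>?V1. Q (?P1 i)}) = F j + (F k' + int (card {i\<in>V. Q (P i)}))" .
    have Fj: "F j = (if Q R then 1 else 0)" using jk by (simp add: F_def)
    have Fk: "F k' = (if Q (R\<inverse>) then 1 else 0)" by (simp add: F_def)
    show ?thesis using fin unfolding Fj Fk by linarith
  qed
  obtain V' P' where V': "profile V' X P'" "f V' X P' = f ?V1 X ?P1"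
    "\<forall>a b. margin V' P' a b = margin ?V1 ?P1 a b" "int (card V') = int (card ?V1) + 2 * int k"
    "\<forall>Q. int (card {i\<in>V'. Q (P' i)}) = int (card {i\<in>?V1. Q (?P1 i)}) +
          int k * ((if Q R then 1 else 0) + (if Q (R\<inverse>) then 1 else 0))"
    using Suc.IH[OF p1] by blast
  show ?case
  proof (intro exI[of _ V'] exI[of _ P'] conjI allI)
    show "profile V' X P'" by (rule V'(1))
    show "f V' X P' = f V X P" using V'(2) fr by simp
    show "margin V' P' a b = margin V P a b" for a b using V'(3) mg by simp
    show "int (card V') = int (card V) + 2 * int (Suc k)" using V'(4) cV by simp
    show "int (card {i\<in>V'. Q (P' i)}) = int (card {i\<in>V. Q (P i)}) +
          int (Suc k) * ((if Q R then 1 else 0) + (if Q (R\<inverse>) then 1 else 0))" for Q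
      using V'(5) cQ[of Q] by (simp add: algebra_simps)
  qed
qed

lemma fiber3:
  assumes fA: "finite A" and fB: "finite B" and cAB: "card A = card B"
    and gA: "\<forall>a\<in>A. g a < (3::nat)" and hB: "\<forall>b\<in>B. h b < 3"
    and c0: "card {a\<in>A. g a = 0} = card {b\<in>B. h b = 0}"
    and c1: "card {a\<in>A. g a = 1} = card {b\<in>B. h b = 1}"
  shows "\<exists>\<tau>. bij_betw \<tau> A B \<and> (\<forall>a\<in>A. h (\<tau> a) = g a)"
proof (rule fiber_bij[OF fA fB])
  fix k
  have part: "int (card A) = int (card {a\<in>A. g a = 0}) + int (card {a\<in>A. g a = 1}) + int (card {a\<in>A. g a = 2})"
    if "finite A" "\<forall>a\<in>A. g a < (3::nat)" for A :: "'x set" and g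
  proof -
    have "int (card A) = (\<Sum>a\<in>A. (if g a = 0 then 1 else 0) + (if g a = 1 then 1 else 0) + (if g a = 2 then 1 else (0::int)))"
    proof -
      have "(\<Sum>a\<in>A. (if g a = 0 then 1 else 0) + (if g a = 1 then 1 else 0) + (if g a = 2 then 1 else (0::int))) = (\<Sum>a\<in>A. 1)"
      proof (intro sum.cong refl)
        fix a assume "a \<in> A"
        then have "g a < 3" using that by blast
        then have "g a = 0 \<or> g a = 1 \<or> g a = 2" by auto
        then show "(if g a = 0 then 1 else 0) + (if g a = 1 then 1 else 0) + (if g a = 2 then 1 else (0::int)) = 1"
          by auto
      qed
      then show ?thesis by simp
    qed
    also have "\<dots> = int (card {a\<in>A. g a = 0}) + int (card {a\<in>A. g a = 1}) + int (card {a\<in>A. g a = 2})"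
      using that by (simp add: sum.distrib card_filter_int)
    finally show ?thesis .
  qed
  have pA: "int (card A) = int (card {a\<in>A. g a = 0}) + int (card {a\<in>A. g a = 1}) + int (card {a\<in>A. g a = 2})"
    using part[OF fA gA] .
  have pB: "int (card B) = int (card {a\<in>B. h a = 0}) + int (card {a\<in>B. h a = 1}) + int (card {a\<in>B. h a = 2})"
    using part[OF fB hB] .
  show "card {a\<in>A. g a = k} = card {b\<in>B. h b = k}"
  proof (cases "k < 3")
    case True
    then have "k = 0 \<or> k = 1 \<or> k = 2" by auto
    then show ?thesis using c0 c1 pA pB cAB by auto
  next
    case False
    have e1: "{a\<in>A. g a = k} = {}" using gA False by auto
    have e2: "{b\<in>B. h b = k} = {}" using hB False by auto
    show ?thesis unfolding e1 e2 by simp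
  qed
qed

context cyc
begin

definition Iset :: "nat \<Rightarrow> nat \<Rightarrow> (nat \<times> nat) set" where
  "Iset M e = {..<M} \<times> {..<length cs} \<union> {M..<M+e} \<times> {0}"
definition bal :: "nat \<Rightarrow> nat \<Rightarrow> nat \<times> nat \<Rightarrow> ('c \<times> 'c) set" where
  "bal m M \<iota> = (if fst \<iota> < m then top2 (snd \<iota>) else if fst \<iota> < M then top1 (snd \<iota>) else {})"
definition rot :: "nat \<Rightarrow> nat \<times> nat \<Rightarrow> nat \<times> nat" where
  "rot M \<iota> = (if fst \<iota> < M then (fst \<iota>, nxt (snd \<iota>)) else \<iota>)"

lemma finite_Iset: "finite (Iset M e)" by (simp add: Iset_def)

lemma sum_I:
  fixes F :: "('c \<times> 'c) set \<Rightarrow> int"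
  assumes "m \<le> M"
  shows "(\<Sum>\<iota>\<in>Iset M e. F (bal m M \<iota>)) = int m * (\<Sum>j<length cs. F (top2 j))
      + int (M - m) * (\<Sum>j<length cs. F (top1 j)) + int e * F {}"
proof -
  let ?I1 = "{..<M} \<times> {..<length cs}" and ?I2 = "{M..<M+e} \<times> {0::nat}"
  have dj: "?I1 \<inter> ?I2 = {}" by auto
  have "(\<Sum>\<iota>\<in>Iset M e. F (bal m M \<iota>)) = (\<Sum>\<iota>\<in>?I1. F (bal m M \<iota>)) + (\<Sum>\<iota>\<in>?I2. F (bal m M \<iota>))"
    unfolding Iset_def by (rule sum.union_disjoint) (auto)
  also have "(\<Sum>\<iota>\<in>?I2. F (bal m M \<iota>)) = int e * F {}"
  proof -
    have "(\<Sum>\<iota>\<in>?I2. F (bal m M \<iota>)) = (\<Sum>\<iota>\<in>?I2. F {})"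
      using assms by (intro sum.cong refl) (auto simp: bal_def)
    then show ?thesis by simp
  qed
  also have "(\<Sum>\<iota>\<in>?I1. F (bal m M \<iota>)) = (\<Sum>r<M. \<Sum>j<length cs. F (bal m M (r,j)))"
    by (simp add: sum.cartesian_product)
  also have "\<dots> = (\<Sum>r<m. \<Sum>j<length cs. F (bal m M (r,j))) + (\<Sum>r\<in>{m..<M}. \<Sum>j<length cs. F (bal m M (r,j)))"
  proof -
    have e: "{..<M} = {..<m} \<union> {m..<M}" using assms by auto
    show ?thesis unfolding e by (rule sum.union_disjoint) auto
  qed
  also have "(\<Sum>r<m. \<Sum>j<length cs. F (bal m M (r,j))) = (\<Sum>r<m. \<Sum>j<length cs. F (top2 j))"
    by (intro sum.cong refl) (simp add: bal_def)
  also have "(\<Sum>r\<in>{m..<M}. \<Sum>j<length cs. F (bal m M (r,j))) = (\<Sum>r\<in>{m..<M}. \<Sum>j<length cs. F (top1 j))"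
    by (intro sum.cong refl) (simp add: bal_def)
  finally show ?thesis by simp
qed

lemma card_I: "card (Iset M e) = M * length cs + e"
proof -
  have "card (Iset M e) = card ({..<M} \<times> {..<length cs}) + card ({M..<M+e} \<times> {0::nat})"
    unfolding Iset_def by (rule card_Un_disjoint) auto
  then show ?thesis by (simp add: card_cartesian_product)
qed

lemma rot_in: "\<iota> \<in> Iset M e \<Longrightarrow> rot M \<iota> \<in> Iset M e"
  by (auto simp: Iset_def rot_def nxt_lt)

lemma bij_rot: "bij_betw (rot M) (Iset M e) (Iset M e)"
proof (rule bij_betw_imageI)
  show "inj_on (rot M) (Iset M e)"
  proof
    fix a b assume ab: "a \<in> Iset M e" "b \<in> Iset M e" "rot M a = rot M b"
    obtain r j r' j' where a: "a = (r,j)" and b: "b = (r',j')" by (cases a, cases b) auto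
    show "a = b"
    proof (cases "r < M")
      case True
      then have "r' < M" using ab a b by (auto simp: rot_def split: if_splits)
      then show ?thesis using ab a b True by (auto simp: rot_def Iset_def nxt_inj)
    next
      case False
      then have "\<not> r' < M" using ab a b by (auto simp: rot_def split: if_splits)
      then show ?thesis using ab a b False by (auto simp: rot_def)
    qed
  qed
  show "rot M ` Iset M e = Iset M e"
  proof
    show "rot M ` Iset M e \<subseteq> Iset M e" using rot_in by auto
    show "Iset M e \<subseteq> rot M ` Iset M e"
    proof
      fix \<iota> assume i: "\<iota> \<in> Iset M e"
      obtain r j where rj: "\<iota> = (r,j)" by (cases \<iota>) auto
      show "\<iota> \<in> rot M ` Iset M e"
      proof (cases "r < M")
        case True
        then have j: "j < length cs" using i rj by (auto simp: Iset_def)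
        have "(r, prv j) \<in> Iset M e" using True j prv_lt by (auto simp: Iset_def)
        moreover have "rot M (r, prv j) = \<iota>" using True j rj by (simp add: rot_def nxt_prv)
        ultimately show ?thesis by (metis image_eqI)
      next
        case False
        then have "rot M \<iota> = \<iota>" using rj by (simp add: rot_def)
        then show ?thesis using i by (metis image_eqI)
      qed
    qed
  qed
qed

lemma swo_bal: "swo (set cs) (bal m M \<iota>)"
  by (simp add: bal_def swo_top2 swo_top1 swo_empty)

lemma bal_equiv:
  assumes "\<iota> \<in> Iset M e" "a \<in> set cs" "b \<in> set cs" "m \<le> M"
  shows "(a,b) \<in> bal m M \<iota> \<longleftrightarrow> (pi a, pi b) \<in> bal m M (rot M \<iota>)"
proof -
  obtain r j where rj: "\<iota> = (r,j)" by (cases \<iota>) auto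
  show ?thesis
  proof (cases "r < M")
    case True
    then have j: "j < length cs" using assms rj by (auto simp: Iset_def)
    show ?thesis using True j rj assms equiv_top2[OF j assms(2,3)] equiv_top1[OF j assms(2,3)]
      by (simp add: bal_def rot_def)
  next
    case False
    then show ?thesis using rj assms by (simp add: bal_def rot_def)
  qed
qed

end



context cyc
begin

lemma sum_ind_two:
  "(\<Sum>j<length cs. (if j = 0 \<or> j = length cs - 1 then 1 else 0) :: int) = 2"
proof -
  have "(\<Sum>j<length cs. (if j = 0 \<or> j = length cs - 1 then 1 else 0) :: int)
      = int (card {j\<in>{..<length cs}. j = 0 \<or> j = length cs - 1})"
    by (rule card_filter_int[symmetric]) simp
  also have "{j\<in>{..<length cs}. j = 0 \<or> j = length cs - 1} = {0, length cs - 1}" using len by auto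
  also have "card {0, length cs - 1} = 2" using len by simp
  finally show ?thesis by simp
qed

lemma sum_ind_one: "k < length cs \<Longrightarrow> (\<Sum>j<length cs. (if j = k then 1 else 0) :: int) = 1"
  by (simp add: sum.delta')

lemma cycle_core:
  fixes f :: "('v,'c) vccr" and V :: "'v set" and P
  assumes inf: "infinite (UNIV :: 'v set)" and an: "anonymity f" and ne: "neutrality f"
    and av: "availability f" and nr: "neutral_reversal f" and iia: "coherent_IIA f"
    and pr: "profile V X P" and sub: "set cs \<subseteq> X" and fx: "(cs!0, cs!1) \<in> f V X P"
    and mpos: "margin V P (cs!0) (cs!1) > 0"
    and edges: "\<forall>j < length cs. margin V P (cs!j) (cs!(nxt j)) \<ge> margin V P (cs!0) (cs!1)"
  shows False
proof -
  define x where "x = cs!0"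
  define y where "y = cs!1"
  define m where "m = margin V P x y"
  define m' where "m' = nat m"
  have n3: "length cs \<ge> 3" by (rule len)
  have n01: "0 < length cs" "1 < length cs" using n3 by auto
  have xin: "x \<in> set cs" "y \<in> set cs" unfolding x_def y_def using nth_mem[OF n01(1)] nth_mem[OF n01(2)] by auto
  have xny: "x \<noteq> y" using nth_eq[OF n01(1) n01(2)] by (simp add: x_def y_def)
  have xX: "x \<in> X" "y \<in> X" using xin sub by auto
  have mm: "int m' = m" using mpos by (simp add: m'_def m_def x_def y_def)
  define pt where "pt R = (if (x,y) \<in> R then 0 else if (y,x) \<in> R then 1 else (2::nat))" for R
  have pt3: "pt R < 3" for R by (simp add: pt_def)
  define a where "a = card {i\<in>V. pt (P i) = 0}"
  define b where "b = card {i\<in>V. pt (P i) = 1}"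
  have fV: "finite V" using pr by (simp add: profile_def)
  have swP: "swo X (P i)" if "i \<in> V" for i using pr that by (simp add: profile_def)
  have ab: "int a - int b = m"
  proof -
    have "{i\<in>V. pt (P i) = 0} = {i\<in>V. (x,y) \<in> P i}" by (auto simp: pt_def)
    moreover have "{i\<in>V. pt (P i) = 1} = {i\<in>V. (y,x) \<in> P i}"
      using swo_asym[OF swP] by (auto simp: pt_def)
    ultimately show ?thesis by (simp add: a_def b_def m_def margin_def)
  qed
  define R1 where "R1 = rankrel X (\<lambda>z. if z = x then 1 else 0)"
  have sR1: "swo X R1" by (simp add: R1_def swo_rankrel)
  have ptR1: "pt R1 = 0" "pt (R1\<inverse>) = 1" using xX xny by (auto simp: pt_def R1_def rankrel_def)
  have pt0: "pt {} = 2" by (simp add: pt_def)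
  obtain V1 P1 where A: "profile V1 X P1" "f V1 X P1 = f V X P"
    "\<forall>a b. margin V1 P1 a b = margin V P a b" "int (card V1) = int (card V) + 2 * int m'"
    "\<forall>Q. int (card {i\<in>V1. Q (P1 i)}) = int (card {i\<in>V. Q (P i)}) +
          int m' * ((if Q R1 then 1 else 0) + (if Q (R1\<inverse>) then 1 else 0))"
    using add_pairs[OF inf nr sR1 pr, of m'] by blast
  define t where "t = (m' + b) * length cs"
  obtain V2 P2 where B: "profile V2 X P2" "f V2 X P2 = f V1 X P1"
    "\<forall>a b. margin V2 P2 a b = margin V1 P1 a b" "int (card V2) = int (card V1) + 2 * int t"
    "\<forall>Q. int (card {i\<in>V2. Q (P2 i)}) = int (card {i\<in>V1. Q (P1 i)}) +
          int t * ((if Q {} then 1 else 0) + (if Q ({}\<inverse>) then 1 else 0))"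
    using add_pairs[OF inf nr swo_empty A(1), of t] by blast
  define M where "M = m' + b"
  define e where "e = card V + 2*m' + t"
  define I where "I = Iset M e"
  define \<beta> where "\<beta> = bal m' M"
  have mM: "m' \<le> M" by (simp add: M_def)
  have fV2: "finite V2" using B(1) by (simp add: profile_def)
  have fI: "finite I" by (simp add: I_def finite_Iset)
  have cV0: "int (card {i\<in>V2. pt (P2 i) = 0}) = int a + int m'"
    using B(5)[rule_format, of "\<lambda>R. pt R = 0"] A(5)[rule_format, of "\<lambda>R. pt R = 0"] ptR1 pt0
    by (simp add: a_def)
  have cV1: "int (card {i\<in>V2. pt (P2 i) = 1}) = int b + int m'"
    using B(5)[rule_format, of "\<lambda>R. pt R = 1"] A(5)[rule_format, of "\<lambda>R. pt R = 1"] ptR1 pt0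
    by (simp add: b_def)
  have sumI: "(\<Sum>\<iota>\<in>I. F (\<beta> \<iota>)) = int m' * (\<Sum>j<length cs. F (top2 j)) + int b * (\<Sum>j<length cs. F (top1 j)) + int e * F {}"
    for F :: "('c \<times> 'c) set \<Rightarrow> int"
    using sum_I[OF mM, of F e] by (simp add: I_def \<beta>_def M_def)
  have p2: "pt (top2 j) = 0 \<longleftrightarrow> (j = 0 \<or> j = length cs - 1)" "pt (top2 j) = 1 \<longleftrightarrow> j = 1"
    if "j < length cs" for j
    using pat_top2[OF that] n3 by (auto simp: pt_def x_def y_def)
  have p1: "pt (top1 j) = 0 \<longleftrightarrow> j = 0" "pt (top1 j) = 1 \<longleftrightarrow> j = 1"
    if "j < length cs" for j
    using pat_top1[OF that] by (auto simp: pt_def x_def y_def)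
  have s20: "(\<Sum>j<length cs. (if pt (top2 j) = 0 then 1 else 0) :: int) = 2"
  proof -
    have "(\<Sum>j<length cs. (if pt (top2 j) = 0 then 1 else 0) :: int) = (\<Sum>j<length cs. (if j = 0 \<or> j = length cs - 1 then 1 else 0))"
      using p2 by (intro sum.cong refl) auto
    then show ?thesis using sum_ind_two by simp
  qed
  have s21: "(\<Sum>j<length cs. (if pt (top2 j) = 1 then 1 else 0) :: int) = 1"
  proof -
    have "(\<Sum>j<length cs. (if pt (top2 j) = 1 then 1 else 0) :: int) = (\<Sum>j<length cs. (if j = 1 then 1 else 0))"
      using p2 by (intro sum.cong refl) auto
    then show ?thesis using sum_ind_one[OF n01(2)] by simp
  qed
  have s10: "(\<Sum>j<length cs. (if pt (top1 j) = 0 then 1 else 0) :: int) = 1"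
  proof -
    have "(\<Sum>j<length cs. (if pt (top1 j) = 0 then 1 else 0) :: int) = (\<Sum>j<length cs. (if j = 0 then 1 else 0))"
      using p1 by (intro sum.cong refl) auto
    then show ?thesis using sum_ind_one[OF n01(1)] by simp
  qed
  have s11: "(\<Sum>j<length cs. (if pt (top1 j) = 1 then 1 else 0) :: int) = 1"
  proof -
    have "(\<Sum>j<length cs. (if pt (top1 j) = 1 then 1 else 0) :: int) = (\<Sum>j<length cs. (if j = 1 then 1 else 0))"
      using p1 by (intro sum.cong refl) auto
    then show ?thesis using sum_ind_one[OF n01(2)] by simp
  qed
  have cI0: "int (card {\<iota>\<in>I. pt (\<beta> \<iota>) = 0}) = 2 * int m' + int b"
    using card_filter_int[OF fI, of "\<lambda>\<iota>. pt (\<beta> \<iota>) = 0"] sumI[of "\<lambda>R. if pt R = 0 then 1 else 0"] s20 s10 pt0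
    by simp
  have cI1: "int (card {\<iota>\<in>I. pt (\<beta> \<iota>) = 1}) = int m' + int b"
    using card_filter_int[OF fI, of "\<lambda>\<iota>. pt (\<beta> \<iota>) = 1"] sumI[of "\<lambda>R. if pt R = 1 then 1 else 0"] s21 s11 pt0
    by simp
  have cI: "card I = M * length cs + e" by (simp add: I_def card_I)
  have cVI: "card V2 = card I"
  proof -
    have "int (card V2) = int (card V) + 2 * int m' + 2 * int t" using A(4) B(4) by simp
    moreover have "int (card I) = int t + int (card V) + 2 * int m' + int t"
      using cI by (simp add: e_def t_def M_def)
    ultimately show ?thesis by simp
  qed
  have c0: "card {i\<in>V2. pt (P2 i) = 0} = card {\<iota>\<in>I. pt (\<beta> \<iota>) = 0}"
  proof -
    have "int (card {i\<in>V2. pt (P2 i) = 0}) = int (card {\<iota>\<in>I. pt (\<beta> \<iota>) = 0})"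
      using cV0 cI0 ab mm by linarith
    then show ?thesis by simp
  qed
  have c1: "card {i\<in>V2. pt (P2 i) = 1} = card {\<iota>\<in>I. pt (\<beta> \<iota>) = 1}"
  proof -
    have "int (card {i\<in>V2. pt (P2 i) = 1}) = int (card {\<iota>\<in>I. pt (\<beta> \<iota>) = 1})"
      using cV1 cI1 by linarith
    then show ?thesis by simp
  qed
  obtain \<tau> where tau: "bij_betw \<tau> V2 I" "\<forall>i\<in>V2. pt (\<beta> (\<tau> i)) = pt (P2 i)"
    using fiber3[OF fV2 fI cVI _ _ c0 c1] pt3 by blast

  have tI: "\<tau> i \<in> I" if "i \<in> V2" for i using tau(1) that by (auto simp: bij_betw_def)
  define X' where "X' = set cs"
  define S where "S i = (if i \<in> V2 then \<beta> (\<tau> i) else {})" for i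
  have V2ne: "V2 \<noteq> {}" using B(1) by (simp add: profile_def)
  have swS: "swo X' (\<beta> \<iota>)" for \<iota> by (simp add: X'_def \<beta>_def swo_bal)
  have prS: "profile V2 X' S"
    unfolding profile_def using fV2 V2ne swS xin by (auto simp: S_def X'_def)
  have X'X: "X' \<subseteq> X" using sub by (simp add: X'_def)
  have swP2: "swo X (P2 i)" if "i \<in> V2" for i using B(1) that by (simp add: profile_def)
  have restr: "P2 i \<inter> ({x,y} \<times> {x,y}) = S i \<inter> ({x,y} \<times> {x,y})" if i: "i \<in> V2" for i
  proof -
    have e: "S i = \<beta> (\<tau> i)" using i by (simp add: S_def)
    have pp: "pt (\<beta> (\<tau> i)) = pt (P2 i)" using tau(2) i by blast
    have ir1: "(z,z) \<notin> P2 i" for z using swP2[OF i] by (simp add: swo_def)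
    have ir2: "(z,z) \<notin> \<beta> (\<tau> i)" for z using swS[of "\<tau> i"] by (simp add: swo_def)
    have as1: "(x,y) \<in> P2 i \<Longrightarrow> (y,x) \<notin> P2 i" using swo_asym[OF swP2[OF i]] by blast
    have as2: "(x,y) \<in> \<beta> (\<tau> i) \<Longrightarrow> (y,x) \<notin> \<beta> (\<tau> i)" using swo_asym[OF swS] by blast
    have q1: "(x,y) \<in> P2 i \<longleftrightarrow> (x,y) \<in> \<beta> (\<tau> i)" using pp by (auto simp: pt_def split: if_splits)
    have q2: "(y,x) \<in> P2 i \<longleftrightarrow> (y,x) \<in> \<beta> (\<tau> i)" using pp as1 as2 by (auto simp: pt_def split: if_splits)
    show ?thesis unfolding e using ir1 ir2 q1 q2 by auto
  qed
  have mS: "margin V2 S a' b' = (\<Sum>\<iota>\<in>I. vt (\<beta> \<iota>) a' b')" for a' b'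
  proof -
    have "margin V2 S a' b' = (\<Sum>i\<in>V2. vt (\<beta> (\<tau> i)) a' b')"
      using fV2 by (simp add: margin_sum S_def)
    also have "\<dots> = (\<Sum>\<iota>\<in>I. vt (\<beta> \<iota>) a' b')" by (rule sum.reindex_bij_betw[OF tau(1)])
    finally show ?thesis .
  qed
  have mS2: "margin V2 S (cs!u) (cs!v) = int m' * ((if nxt u = v then 1 else 0) - (if nxt v = u then 1 else 0))"
    if "u < length cs" "v < length cs" "u \<noteq> v" for u v
    using mS[of "cs!u" "cs!v"] sumI[of "\<lambda>R. vt R (cs!u) (cs!v)"] sum_vt_top2[OF that] sum_vt_top1[OF that]
    by simp
  have mP2: "margin V2 P2 a' b' = margin V P a' b'" for a' b' using A(3) B(3) by simp
  have coh: "coh_reduct x y V2 X P2 V2 X' S"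
    unfolding coh_reduct_def
  proof (intro conjI ballI impI)
    show "x \<in> X'" "y \<in> X'" "X' \<subseteq> X" "V2 = V2" using xin X'X by (auto simp: X'_def)
    show "P2 i \<inter> ({x, y} \<times> {x, y}) = S i \<inter> ({x, y} \<times> {x, y})" if "i \<in> V2" for i using restr[OF that] .
    fix a' b' assume ab': "a' \<in> X'" "b' \<in> X'" "{a', b'} \<noteq> {x, y} \<and> 0 < margin V2 S a' b'"
    obtain u where u: "u < length cs" "a' = cs!u" using ab'(1) in_set_nth by (auto simp: X'_def)
    obtain v where v: "v < length cs" "b' = cs!v" using ab'(2) in_set_nth by (auto simp: X'_def)
    have uv: "u \<noteq> v" using ab' u v by auto
    have pos: "0 < int m' * ((if nxt u = v then 1 else 0) - (if nxt v = u then 1 else 0))"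
      using ab' mS2[OF u(1) v(1) uv] u v by simp
    then have nu: "nxt u = v" by (auto split: if_splits)
    have le: "margin V2 S a' b' \<le> int m'" using mS2[OF u(1) v(1) uv] u v by (auto split: if_splits)
    have "margin V P (cs!u) (cs!(nxt u)) \<ge> m" using edges u(1) by (simp add: m_def x_def y_def)
    then show "margin V2 S a' b' \<le> margin V2 P2 a' b'" using le mm nu u v mP2 by simp
  qed
  have fx2: "(x,y) \<in> f V2 X P2" using fx A(2) B(2) by (simp add: x_def y_def)
  have fS: "(x,y) \<in> f V2 X' S"
    using iia[unfolded coherent_IIA_def, rule_format, OF conjI[OF B(1) conjI[OF prS conjI[OF coh fx2]]]] .
  define \<sigma> where "\<sigma> i = inv_into V2 \<tau> (rot M (\<tau> i))" for i
  have brot: "bij_betw (rot M) I I" by (simp add: I_def bij_rot)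
  have bs: "bij_betw \<sigma> V2 V2"
  proof -
    have "bij_betw (\<lambda>i. rot M (\<tau> i)) V2 I" using bij_betw_trans[OF tau(1) brot] by (simp add: comp_def)
    then have "bij_betw (inv_into V2 \<tau> \<circ> (\<lambda>i. rot M (\<tau> i))) V2 V2"
      using bij_betw_trans bij_betw_inv_into[OF tau(1)] by blast
    then show ?thesis unfolding \<sigma>_def[abs_def] by (simp add: comp_def)
  qed
  have ts: "\<tau> (\<sigma> i) = rot M (\<tau> i)" if "i \<in> V2" for i
  proof -
    have "rot M (\<tau> i) \<in> \<tau> ` V2" using tau(1) brot tI[OF that] by (auto simp: bij_betw_def)
    then show ?thesis by (simp add: \<sigma>_def f_inv_into_f)
  qed
  have sV: "\<sigma> i \<in> V2" if "i \<in> V2" for i using bs that by (auto simp: bij_betw_def)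
  define S' where "S' i = (if i \<in> V2 then S (\<sigma> i) else {})" for i
  have prS': "profile V2 X' S'"
    unfolding profile_def using fV2 V2ne swS xin sV by (auto simp: S'_def S_def X'_def)
  have ss: "\<forall>i\<in>V2. S' i = S (\<sigma> i)" by (simp add: S'_def)
  have anS: "f V2 X' S = f V2 X' S'"
    using an[unfolded anonymity_def, rule_format, OF conjI[OF prS conjI[OF prS' conjI[OF bs ss]]]] .
  have relS: "\<forall>i\<in>V2. \<forall>a'\<in>X'. \<forall>b'\<in>X'. (a',b') \<in> S i \<longleftrightarrow> (pi a', pi b') \<in> S' i"
  proof (intro ballI)
    fix i a' b' assume i: "i \<in> V2" and ab: "a' \<in> X'" "b' \<in> X'"
    have "S' i = \<beta> (rot M (\<tau> i))" using i sV ts by (simp add: S'_def S_def)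
    moreover have "S i = \<beta> (\<tau> i)" using i by (simp add: S_def)
    ultimately show "(a',b') \<in> S i \<longleftrightarrow> (pi a', pi b') \<in> S' i"
      using bal_equiv[of "\<tau> i" M e a' b' m'] tI[OF i] ab mM by (simp add: I_def X'_def \<beta>_def)
  qed
  have bpi: "bij_betw pi X' X'" by (simp add: X'_def bij_pi)
  have step: "(pi a', pi b') \<in> f V2 X' S" if "a' \<in> X'" "b' \<in> X'" "(a',b') \<in> f V2 X' S" for a' b'
    using ne[unfolded neutrality_def, rule_format, OF conjI[OF prS conjI[OF prS' conjI[OF bpi relS]]], OF that(1,2)]
      that(3) anS by simp
  have allc: "\<forall>j. j < length cs \<longrightarrow> (cs!j, cs!(nxt j)) \<in> f V2 X' S"
  proof (intro allI)
    fix j show "j < length cs \<longrightarrow> (cs!j, cs!(nxt j)) \<in> f V2 X' S"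
    proof (induction j)
      case 0
      have "nxt 0 = 1" using n3 by (simp add: nxt_def)
      then show ?case using fS by (simp add: x_def y_def)
    next
      case (Suc j)
      show ?case
      proof
        assume sj: "Suc j < length cs"
        then have j: "j < length cs" by simp
        have nj: "nxt j = Suc j" using sj by (simp add: nxt_def)
        have "(cs!j, cs!(nxt j)) \<in> f V2 X' S" using Suc.IH j by blast
        moreover have "cs!j \<in> X'" "cs!(nxt j) \<in> X'" using j nxt_lt[OF j] by (auto simp: X'_def)
        ultimately have "(pi (cs!j), pi (cs!(nxt j))) \<in> f V2 X' S" using step by blast
        then show "(cs!(Suc j), cs!(nxt (Suc j))) \<in> f V2 X' S"
          using pi_nth[OF j] pi_nth[OF nxt_lt[OF j]] nj by simp
      qed
    qed
  qed
  obtain z where z: "z \<in> X'" "\<forall>w. (w,z) \<notin> f V2 X' S"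
    using av[unfolded availability_def, rule_format, OF prS] by blast
  obtain u where u: "u < length cs" "z = cs!u" using z(1) in_set_nth by (auto simp: X'_def)
  have "(cs!(prv u), cs!(nxt (prv u))) \<in> f V2 X' S" using allc prv_lt[OF u(1)] by blast
  then show False using z(2) u nxt_prv[OF u(1)] by simp
qed

end


lemma margin_doubling:
  assumes "profile V X P" "profile V2 X P2" "doubling V P V2 P2"
  shows "margin V2 P2 a b = 2 * margin V P a b"
proof -
  obtain g1 g2 where g: "inj_on g1 V" "inj_on g2 V" "g1 ` V \<inter> g2 ` V = {}"
    "V2 = g1 ` V \<union> g2 ` V" "\<forall>i\<in>V. P2 (g1 i) = P i \<and> P2 (g2 i) = P i"
    using assms(3) unfolding doubling_def by blast
  have fV: "finite V" using assms(1) by (simp add: profile_def)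
  have "margin V2 P2 a b = (\<Sum>i\<in>g1 ` V. vt (P2 i) a b) + (\<Sum>i\<in>g2 ` V. vt (P2 i) a b)"
    using fV g by (simp add: margin_sum sum.union_disjoint)
  also have "(\<Sum>i\<in>g1 ` V. vt (P2 i) a b) = (\<Sum>i\<in>V. vt (P i) a b)"
    using g by (simp add: sum.reindex)
  also have "(\<Sum>i\<in>g2 ` V. vt (P2 i) a b) = (\<Sum>i\<in>V. vt (P i) a b)"
    using g by (simp add: sum.reindex)
  finally show ?thesis using fV by (simp add: margin_sum)
qed

lemma sc_doubling:
  assumes "profile V X P" "profile V2 X P2" "doubling V P V2 P2"
  shows "sc V2 X P2 = sc V X P"
proof -
  have m: "\<And>a b. margin V2 P2 a b = 2 * margin V P a b" using margin_doubling[OF assms] .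
  have "\<And>k. G V2 X P2 (2 * k) = G V X P k" by (auto simp: G_def m)
  then show ?thesis by (auto simp: sc_iff m)
qed

lemma sc_homogeneity: "homogeneity sc"
  unfolding homogeneity_def using sc_doubling by metis

lemma sc_downward_homogeneity: "downward_homogeneity sc"
  unfolding downward_homogeneity_def using sc_doubling by blast

lemma f_sub_sc:
  fixes f :: "('v,'c) vccr"
  assumes inf: "infinite (UNIV :: 'v set)" and vc: "is_vccr f" and an: "anonymity f" and ne: "neutrality f"
    and av: "availability f" and nr: "neutral_reversal f" and iia: "coherent_IIA f"
    and cd: "coherent_defeat f" and pr: "profile V X P" and fxy: "(x,y) \<in> f V X P"
  shows "(x,y) \<in> sc V X P"
proof -
  let ?m = "margin V P x y"
  have mpos: "?m > 0" using f_margin_pos[OF vc an ne iia cd pr fxy] .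
  have xX: "x \<in> X" "y \<in> X" using vc pr fxy unfolding is_vccr_def by blast+
  have xny: "x \<noteq> y" using mpos by auto
  show ?thesis unfolding sc_iff
  proof (intro conjI xX mpos notI)
    assume "(y,x) \<in> (G V X P ?m)\<^sup>+"
    then obtain p where p: "distinct p" "length p \<ge> 2" "hd p = y" "last p = x"
      "successively (\<lambda>u v. (u,v) \<in> G V X P ?m) p" using trancl_path xny by metis
    have edge: "(p!i, p!Suc i) \<in> G V X P ?m" if "Suc i < length p" for i
      using p(5) that by (simp add: successively_conv_nth)
    have sp: "set p \<subseteq> X" using succ_set_sub[OF p(5) p(2)] by (auto simp: G_def)
    have pne: "p \<noteq> []" using p(2) by auto
    have p0: "p!0 = y" using p(3) pne by (simp add: hd_conv_nth)
    have plast: "p!(length p - 1) = x" using p(4) pne by (simp add: last_conv_nth)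
    have l3: "length p \<ge> 3"
    proof (rule ccontr)
      assume "\<not> length p \<ge> 3"
      then have l2: "length p = 2" using p(2) by simp
      then have "(p!0, p!1) \<in> G V X P ?m" using edge[of 0] by simp
      moreover have "p!1 = x" using plast l2 by simp
      ultimately have "margin V P y x \<ge> ?m" using p0 by (simp add: G_def)
      then show False using mpos margin_swap[of V P y x] by simp
    qed
    define cs where "cs = x # butlast p"
    have lcs: "length cs = length p" using pne by (simp add: cs_def)
    have db: "distinct (butlast p)" using p(1) by (simp add: distinct_butlast)
    have xb: "x \<notin> set (butlast p)"
    proof -
      have "p = butlast p @ [last p]" using pne by simp
      then have "distinct (butlast p @ [last p])" using p(1) by simp
      then show ?thesis using p(4) by simp
    qed
    have dcs: "distinct cs" using db xb by (simp add: cs_def)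
    interpret C: cyc cs using dcs l3 lcs by unfold_locales auto
    have cs_j: "cs!j = p!(j - 1)" if j1: "j \<ge> 1" and j2: "j < length cs" for j
    proof -
      obtain k where k: "j = Suc k" using j1 by (cases j) auto
      have "k < length p - 1" using j2 k lcs by simp
      then show ?thesis using k by (simp add: cs_def nth_butlast)
    qed
    have cs0: "cs!0 = x" by (simp add: cs_def)
    have cs1: "cs!1 = y" using cs_j[of 1] l3 lcs p0 by simp
    have sub: "set cs \<subseteq> X"
    proof -
      have "set (butlast p) \<subseteq> set p" by (rule in_set_butlastD[THEN subsetI[of "set (butlast p)"]]) 
      then show ?thesis using sp xX by (auto simp: cs_def)
    qed
    have edges: "\<forall>j < length cs. margin V P (cs!j) (cs!(C.nxt j)) \<ge> margin V P (cs!0) (cs!1)"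
    proof (intro allI impI)
      fix j assume j: "j < length cs"
      show "margin V P (cs!j) (cs!(C.nxt j)) \<ge> margin V P (cs!0) (cs!1)"
      proof (cases "j = 0")
        case True
        have "C.nxt 0 = 1" using l3 lcs by (simp add: C.nxt_def)
        then show ?thesis using True by simp
      next
        case False
        have a: "cs!j = p!(j-1)" using cs_j[of j] False j by simp
        have b: "cs!(C.nxt j) = p!j"
        proof (cases "Suc j = length cs")
          case True
          then have "C.nxt j = 0" by (simp add: C.nxt_def)
          moreover have "j = length p - 1" using True lcs by simp
          ultimately show ?thesis using cs0 plast by simp
        next
          case F2: False
          then have "C.nxt j = Suc j" by (simp add: C.nxt_def)
          moreover have "Suc j < length cs" using F2 j by simp
          ultimately show ?thesis using cs_j[of "Suc j"] by simp
        qed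
        have "(p!(j-1), p!Suc (j-1)) \<in> G V X P ?m" using edge[of "j-1"] False j lcs by simp
        then have "(p!(j-1), p!j) \<in> G V X P ?m" using False by simp
        then show ?thesis using a b cs0 cs1 by (simp add: G_def)
      qed
    qed
    have fx: "(cs!0, cs!1) \<in> f V X P" using fxy cs0 cs1 by simp
    have mp: "margin V P (cs!0) (cs!1) > 0" using mpos cs0 cs1 by simp
    show False using C.cycle_core[OF inf an ne av nr iia pr sub fx mp edges] .
  qed
qed

lemma characterization:
  fixes f :: "('v,'c) vccr"
  assumes inf: "infinite (UNIV :: 'v set)" and vc: "is_vccr f" and an: "anonymity f" and ne: "neutrality f"
    and av: "availability f" and nr: "neutral_reversal f" and iia: "coherent_IIA f"
    and cd: "coherent_defeat f" and pid: "positive_involvement_defeat f" and pr: "profile V X P"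
  shows "f V X P = sc V X P"
proof
  show "f V X P \<subseteq> sc V X P" using f_sub_sc[OF inf vc an ne av nr iia cd pr] by auto
  show "sc V X P \<subseteq> f V X P" using sc_sub_f[OF inf cd pid pr] by auto
qed

theorem theorem7p10:
  assumes "infinite (UNIV :: 'v set)" and "infinite (UNIV :: 'c set)"
  shows "(is_vccr (sc :: ('v,'c) vccr) \<and> anonymity (sc :: ('v,'c) vccr) \<and> neutrality (sc :: ('v,'c) vccr)
          \<and> availability (sc :: ('v,'c) vccr) \<and> homogeneity (sc :: ('v,'c) vccr)
          \<and> downward_homogeneity (sc :: ('v,'c) vccr) \<and> neutral_indifference (sc :: ('v,'c) vccr)
          \<and> neutral_reversal (sc :: ('v,'c) vccr) \<and> monotonicity (sc :: ('v,'c) vccr)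
          \<and> coherent_IIA (sc :: ('v,'c) vccr) \<and> coherent_defeat (sc :: ('v,'c) vccr)
          \<and> positive_involvement_defeat (sc :: ('v,'c) vccr))
       \<and> (\<forall>f :: ('v,'c) vccr. is_vccr f \<and> anonymity f \<and> neutrality f \<and> availability f
            \<and> downward_homogeneity f \<and> neutral_indifference f \<and> neutral_reversal f
            \<and> monotonicity_two f \<and> coherent_IIA f \<and> coherent_defeat f
            \<and> positive_involvement_defeat f
            \<longrightarrow> (\<forall>V X P. profile V X P \<longrightarrow> f V X P = sc V X P))
       \<and> (\<forall>f :: ('v,'c) vccr. is_vccr f \<and> anonymity f \<and> neutrality f \<and> availability f
            \<and> homogeneity f \<and> neutral_reversal f
            \<and> monotonicity_two f \<and> coherent_IIA f \<and> coherent_defeat f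
            \<and> positive_involvement_defeat f
            \<longrightarrow> (\<forall>V X P. profile V X P \<longrightarrow> f V X P = sc V X P))"
proof (intro conjI allI impI)
  show "is_vccr (sc :: ('v,'c) vccr)" by (rule sc_is_vccr)
  show "anonymity (sc :: ('v,'c) vccr)" by (rule sc_anonymity)
  show "neutrality (sc :: ('v,'c) vccr)" by (rule sc_neutrality)
  show "availability (sc :: ('v,'c) vccr)" by (rule sc_availability)
  show "homogeneity (sc :: ('v,'c) vccr)" by (rule sc_homogeneity)
  show "downward_homogeneity (sc :: ('v,'c) vccr)" by (rule sc_downward_homogeneity)
  show "neutral_indifference (sc :: ('v,'c) vccr)" by (rule sc_neutral_indifference)
  show "neutral_reversal (sc :: ('v,'c) vccr)" by (rule sc_neutral_reversal)
  show "monotonicity (sc :: ('v,'c) vccr)" by (rule sc_monotonicity)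
  show "coherent_IIA (sc :: ('v,'c) vccr)" by (rule sc_coherent_IIA)
  show "coherent_defeat (sc :: ('v,'c) vccr)" by (rule sc_coherent_defeat)
  show "positive_involvement_defeat (sc :: ('v,'c) vccr)" by (rule sc_positive_involvement)
next
  fix f :: "('v,'c) vccr" and V :: "'v set" and X :: "'c set" and P :: "'v \<Rightarrow> ('c \<times> 'c) set"
  assume h: "is_vccr f \<and> anonymity f \<and> neutrality f \<and> availability f
            \<and> downward_homogeneity f \<and> neutral_indifference f \<and> neutral_reversal f
            \<and> monotonicity_two f \<and> coherent_IIA f \<and> coherent_defeat f
            \<and> positive_involvement_defeat f" and pr: "profile V X P"
  show "f V X P = sc V X P" using characterization[OF assms(1) _ _ _ _ _ _ _ _ pr] h by blast
next
  fix f :: "('v,'c) vccr" and V :: "'v set" and X :: "'c set" and P :: "'v \<Rightarrow> ('c \<times> 'c) set"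
  assume h: "is_vccr f \<and> anonymity f \<and> neutrality f \<and> availability f
            \<and> homogeneity f \<and> neutral_reversal f
            \<and> monotonicity_two f \<and> coherent_IIA f \<and> coherent_defeat f
            \<and> positive_involvement_defeat f" and pr: "profile V X P"
  show "f V X P = sc V X P" using characterization[OF assms(1) _ _ _ _ _ _ _ _ pr] h by blast
qed


end
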